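(* Let $H$ be a separable complex Hilbert space, let $\mathbf A:\mathcal D(\mathbf A)\subset H\to H$ be the generator of an exponentially stable $C_0$-semigroup $\mathbf S(t)\in\mathscr L(H)$ with $\|\mathbf S(t)\|_{\mathscr L(H)}\le Me^{-\alpha t}$ for all $t\ge 0$ (with constants $M,\alpha>0$), and let $\mathbf Q,\mathbf G\in\mathscr L^s(H)$ be symmetric positive semi-definite. Let $\mathbf X\in\mathscr L^s(H)$ be the unique positive semi-definite solution of the Bochner integral equation $$\mathbf X=\int_0^{+\infty}\mathbf S(t)\big(\mathbf Q-\mathbf X\mathbf G\mathbf X\big)\mathbf S^*(t)\,dt .$$ Then $\mathbf X$ is the unique (symmetric positive semi-definite) solution of the strong operator-valued Riccati equation $$\mathbf A\mathbf X+\mathbf X\mathbf A^*-\mathbf X\mathbf G\mathbf X+\mathbf Q=\mathbf 0,$$ i.e. $\mathbf A\mathbf X+\mathbf X\mathbf A^*$ is defined on all of $H$, belongs to $\mathscr L^s(H)$, and the identity holds in $\mathscr L(H)$. Furthermore, if in addition $\mathbf Q\in\mathscr J_1^s(H)$, then $\mathbf X\in\mathscr J_1^s(H)$ and $$\|\mathbf X\|_1\le\frac{M^2}{2\alpha}\|\mathbf Q\|_1 .$$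
   Context: $\mathscr L(H)$ denotes bounded linear operators on $H$, $\mathscr L^s(H)$ the symmetric (self-adjoint) ones. A symmetric $\mathbf T$ is positive semi-definite if $(\phi,\mathbf T\phi)_H\ge0$ for all $\phi\in H$. $\mathscr J_1(H)$ is the space of trace-class operators on $H$, $\mathscr J_1^s(H)$ its symmetric elements, with trace norm $\|\cdot\|_1$ (for symmetric positive semi-definite $\mathbf T$, $\|\mathbf T\|_1=\operatorname{tr}(\mathbf T)=\sum_k(e_k,\mathbf Te_k)_H$ for any orthonormal basis $\{e_k\}$). $\mathbf S^*(t)$ is the adjoint semigroup, generated by $\mathbf A^*$. A $C_0$-semigroup is exponentially stable if $\|\mathbf S(t)\|\le Me^{-\alpha t}$ for some $M,\alpha>0$. The generators are $\mathbf A\phi=\lim_{h\to0^+}h^{-1}(\mathbf S(h)\phi-\phi)$ on its domain, and similarly for $\mathbf A^*$. *)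

theory Defs
  imports "HOL-Analysis.Analysis"
begin

class complex_vector = real_vector +
  fixes scaleC :: "complex \<Rightarrow> 'a \<Rightarrow> 'a"  (infixr \<open>*\<^sub>C\<close> 75)
  assumes scaleC_add_right: "a *\<^sub>C (x + y) = a *\<^sub>C x + a *\<^sub>C y"
    and scaleC_add_left: "(a + b) *\<^sub>C x = a *\<^sub>C x + b *\<^sub>C x"
    and scaleC_scaleC: "a *\<^sub>C (b *\<^sub>C x) = (a * b) *\<^sub>C x"
    and scaleC_one: "1 *\<^sub>C x = x"
    and scaleR_scaleC: "r *\<^sub>R x = complex_of_real r *\<^sub>C x"

class complex_inner = complex_vector + real_normed_vector +
  fixes cinner :: "'a \<Rightarrow> 'a \<Rightarrow> complex"
  assumes cinner_commute: "cinner x y = cnj (cinner y x)"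
    and cinner_add_left: "cinner (x + y) z = cinner x z + cinner y z"
    and cinner_scaleC_left: "cinner (r *\<^sub>C x) y = cnj r * cinner x y"
    and cinner_ge_zero: "0 \<le> Re (cinner x x)"
    and cinner_eq_zero_iff: "cinner x x = 0 \<longleftrightarrow> x = 0"
    and norm_eq_sqrt_cinner: "norm x = sqrt (Re (cinner x x))"

class chilbert_space = complex_inner + complete_space

instantiation complex :: chilbert_space
begin
definition scaleC_complex :: "complex \<Rightarrow> complex \<Rightarrow> complex" where "scaleC_complex a x = a * x"
definition cinner_complex :: "complex \<Rightarrow> complex \<Rightarrow> complex" where "cinner_complex x y = cnj x * y"
instance
proof
  fix a b x y z :: complex and r :: real
  show "a *\<^sub>C (x + y) = a *\<^sub>C x + a *\<^sub>C y" by (simp add: scaleC_complex_def algebra_simps)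
  show "(a + b) *\<^sub>C x = a *\<^sub>C x + b *\<^sub>C x" by (simp add: scaleC_complex_def algebra_simps)
  show "a *\<^sub>C (b *\<^sub>C x) = (a * b) *\<^sub>C x" by (simp add: scaleC_complex_def algebra_simps)
  show "1 *\<^sub>C x = x" by (simp add: scaleC_complex_def)
  show "r *\<^sub>R x = complex_of_real r *\<^sub>C x" by (simp add: scaleC_complex_def scaleR_conv_of_real)
  show "cinner x y = cnj (cinner y x)" by (simp add: cinner_complex_def)
  show "cinner (x + y) z = cinner x z + cinner y z" by (simp add: cinner_complex_def algebra_simps)
  show "cinner (a *\<^sub>C x) y = cnj a * cinner x y" by (simp add: cinner_complex_def scaleC_complex_def)
  show "0 \<le> Re (cinner x x)" by (simp add: cinner_complex_def)
  show "cinner x x = 0 \<longleftrightarrow> x = 0" by (simp add: cinner_complex_def)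
  show "norm x = sqrt (Re (cinner x x))"
    by (simp add: cinner_complex_def cmod_def power2_eq_square)
qed
end

definition clinear :: "('a::complex_vector \<Rightarrow> 'b::complex_vector) \<Rightarrow> bool" where
  "clinear T \<longleftrightarrow> (\<forall>x y. T (x + y) = T x + T y) \<and> (\<forall>c x. T (c *\<^sub>C x) = c *\<^sub>C T x)"

definition bounded_clinear :: "('a::complex_inner \<Rightarrow> 'b::complex_inner) \<Rightarrow> bool" where
  "bounded_clinear T \<longleftrightarrow> clinear T \<and> (\<exists>K. \<forall>x. norm (T x) \<le> norm x * K)"

definition cadjoint :: "('a::complex_inner \<Rightarrow> 'a) \<Rightarrow> 'a \<Rightarrow> 'a" where
  "cadjoint T = (\<lambda>y. THE z. \<forall>x. cinner (T x) y = cinner x z)"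

definition symmetric_op :: "('a::complex_inner \<Rightarrow> 'a) \<Rightarrow> bool" where
  "symmetric_op T \<longleftrightarrow> bounded_clinear T \<and> (\<forall>x y. cinner (T x) y = cinner x (T y))"

definition pos_semidef :: "('a::complex_inner \<Rightarrow> 'a) \<Rightarrow> bool" where
  "pos_semidef T \<longleftrightarrow> symmetric_op T \<and>
     (\<forall>\<phi>. cinner \<phi> (T \<phi>) \<in> \<real> \<and> 0 \<le> Re (cinner \<phi> (T \<phi>)))"

definition orthonormal_fam :: "nat \<Rightarrow> (nat \<Rightarrow> 'a::complex_inner) \<Rightarrow> bool" where
  "orthonormal_fam n e \<longleftrightarrow> (\<forall>i<n. \<forall>j<n. cinner (e i) (e j) = (if i = j then 1 else 0))"

definition trace_sums :: "('a::complex_inner \<Rightarrow> 'a) \<Rightarrow> real set" where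
  "trace_sums T = {(\<Sum>i<n. cmod (cinner (f i) (T (e i)))) | n e f.
                     orthonormal_fam n e \<and> orthonormal_fam n f}"

definition trace_class :: "('a::complex_inner \<Rightarrow> 'a) \<Rightarrow> bool" where
  "trace_class T \<longleftrightarrow> bounded_clinear T \<and> bdd_above (trace_sums T)"

definition trace_norm :: "('a::complex_inner \<Rightarrow> 'a) \<Rightarrow> real" where
  "trace_norm T = Sup (trace_sums T)"

definition c0_semigroup :: "(real \<Rightarrow> 'a::complex_inner \<Rightarrow> 'a) \<Rightarrow> bool" where
  "c0_semigroup S \<longleftrightarrow>
     (\<forall>t\<ge>0. bounded_clinear (S t)) \<and> S 0 = id \<and>
     (\<forall>t s. 0 \<le> t \<longrightarrow> 0 \<le> s \<longrightarrow> S (t + s) = S t \<circ> S s) \<and>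
     (\<forall>\<phi>. ((\<lambda>t. S t \<phi>) \<longlongrightarrow> \<phi>) (at_right 0))"

definition is_generator :: "(real \<Rightarrow> 'a::complex_inner \<Rightarrow> 'a) \<Rightarrow> 'a set \<Rightarrow> ('a \<Rightarrow> 'a) \<Rightarrow> bool" where
  "is_generator S D A \<longleftrightarrow>
     D = {\<phi>. \<exists>\<psi>. ((\<lambda>h. (1 / h) *\<^sub>R (S h \<phi> - \<phi>)) \<longlongrightarrow> \<psi>) (at_right 0)} \<and>
     (\<forall>\<phi>\<in>D. ((\<lambda>h. (1 / h) *\<^sub>R (S h \<phi> - \<phi>)) \<longlongrightarrow> A \<phi>) (at_right 0))"

text \<open>Bochner integral equation \<open>X = \<integral>\<^sub>0\<^sup>\<infinity> S(t)(Q - XGX)S\<^sup>*(t) dt\<close>, the integral being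
  understood in the strong sense (Bochner integral in \<open>H\<close> for each \<open>\<phi>\<close>).\<close>
definition riccati_integral_eq ::
  "(real \<Rightarrow> 'a::{chilbert_space, second_countable_topology} \<Rightarrow> 'a) \<Rightarrow> ('a \<Rightarrow> 'a) \<Rightarrow> ('a \<Rightarrow> 'a) \<Rightarrow> ('a \<Rightarrow> 'a) \<Rightarrow> bool" where
  "riccati_integral_eq S Q G X \<longleftrightarrow>
     (\<forall>\<phi>. has_bochner_integral (lebesgue_on {0..})
             (\<lambda>t. S t (Q (cadjoint (S t) \<phi>) - X (G (X (cadjoint (S t) \<phi>))))) (X \<phi>))"

text \<open>Strong Riccati equation \<open>AX + XA\<^sup>* - XGX + Q = 0\<close>: the operator \<open>AX + XA\<^sup>*\<close> is an element
  \<open>Z\<close> of \<open>\<L>\<^sup>s(H)\<close>, i.e. for every \<open>\<phi>\<in>H\<close>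
  \<open>Z \<phi> = lim\<^sub>h\<^sub>\<rightarrow>\<^sub>0\<^sub>+ h\<^sup>-\<^sup>1 (S(h) X S\<^sup>*(h) - X) \<phi>\<close> (formally \<open>= (AX + XA\<^sup>*) \<phi>\<close>), and on \<open>D(A\<^sup>*)\<close>
  literally \<open>X \<phi> \<in> D(A)\<close> and \<open>A X \<phi> + X A\<^sup>* \<phi> = Z \<phi>\<close>; and \<open>Z - XGX + Q = 0\<close> in \<open>\<L>(H)\<close>.\<close>
definition strong_riccati_eq ::
  "(real \<Rightarrow> 'a::complex_inner \<Rightarrow> 'a) \<Rightarrow> 'a set \<Rightarrow> ('a \<Rightarrow> 'a) \<Rightarrow> 'a set \<Rightarrow> ('a \<Rightarrow> 'a) \<Rightarrow>
   ('a \<Rightarrow> 'a) \<Rightarrow> ('a \<Rightarrow> 'a) \<Rightarrow> ('a \<Rightarrow> 'a) \<Rightarrow> bool" where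
  "strong_riccati_eq S D A Ds As Q G X \<longleftrightarrow>
     (\<exists>Z. symmetric_op Z \<and>
        (\<forall>\<phi>. ((\<lambda>h. (1 / h) *\<^sub>R (S h (X (cadjoint (S h) \<phi>)) - X \<phi>)) \<longlongrightarrow> Z \<phi>) (at_right 0)) \<and>
        (\<forall>\<phi>\<in>Ds. X \<phi> \<in> D \<and> A (X \<phi>) + X (As \<phi>) = Z \<phi>) \<and>
        (\<forall>\<phi>. Z \<phi> - X (G (X \<phi>)) + Q \<phi> = 0))"

end

theory Submission
  imports Defs
begin


lemma scaleC_zero_left [simp]: "(0::complex) *\<^sub>C x = (0::'a::complex_vector)"
  using scaleR_scaleC[of 0 x] by simp

lemma scaleC_zero_right [simp]: "c *\<^sub>C (0::'a::complex_vector) = 0"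
  using scaleC_add_right[of c 0 0] by simp

lemma scaleC_minus_right: "c *\<^sub>C (- x) = - (c *\<^sub>C (x::'a::complex_vector))"
proof -
  have "c *\<^sub>C x + c *\<^sub>C (- x) = 0" by (subst scaleC_add_right[symmetric]) simp
  then show ?thesis by (rule minus_unique[symmetric])
qed

lemma scaleC_diff_right: "c *\<^sub>C (x - y) = c *\<^sub>C x - c *\<^sub>C (y::'a::complex_vector)"
  by (simp only: diff_conv_add_uminus scaleC_add_right scaleC_minus_right)

lemma scaleC_minus_left: "(- c) *\<^sub>C x = - (c *\<^sub>C (x::'a::complex_vector))"
proof -
  have "c *\<^sub>C x + (- c) *\<^sub>C x = 0" by (subst scaleC_add_left[symmetric]) simp
  then show ?thesis by (rule minus_unique[symmetric])
qed

lemma scaleC_diff_left: "(c - d) *\<^sub>C x = c *\<^sub>C x - d *\<^sub>C (x::'a::complex_vector)"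
  by (simp only: diff_conv_add_uminus scaleC_add_left scaleC_minus_left)

lemma scaleC_sum_right: "c *\<^sub>C (\<Sum>i\<in>I. f i) = (\<Sum>i\<in>I. c *\<^sub>C (f i::'a::complex_vector))"
  by (induction I rule: infinite_finite_induct) (auto simp: scaleC_add_right)

lemma scaleC_sum_left: "(\<Sum>i\<in>I. f i) *\<^sub>C x = (\<Sum>i\<in>I. f i *\<^sub>C (x::'a::complex_vector))"
  by (induction I rule: infinite_finite_induct) (auto simp: scaleC_add_left)

lemma scaleC_one' [simp]: "1 *\<^sub>C x = (x::'a::complex_vector)"
  by (rule scaleC_one)

lemma scaleC_scaleR_commute: "c *\<^sub>C (r *\<^sub>R x) = r *\<^sub>R (c *\<^sub>C (x::'a::complex_vector))"
  by (simp add: scaleR_scaleC scaleC_scaleC mult.commute)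

lemma cinner_add_right: "cinner x (y + z) = cinner x y + cinner x (z::'a::complex_inner)"
  by (metis cinner_add_left cinner_commute complex_cnj_add)

lemma cinner_scaleC_right: "cinner x (c *\<^sub>C y) = c * cinner x (y::'a::complex_inner)"
  by (metis cinner_commute cinner_scaleC_left complex_cnj_cnj complex_cnj_mult)

lemma cinner_zero_left [simp]: "cinner 0 (x::'a::complex_inner) = 0"
  using cinner_add_left[of 0 0 x] by simp

lemma cinner_zero_right [simp]: "cinner x (0::'a::complex_inner) = 0"
  using cinner_add_right[of x 0 0] by simp

lemma cinner_minus_left: "cinner (- x) (y::'a::complex_inner) = - cinner x y"
proof -
  have "cinner x y + cinner (- x) y = 0" by (subst cinner_add_left[symmetric]) simp
  then show ?thesis by (rule minus_unique[symmetric])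
qed

lemma cinner_minus_right: "cinner x (- y::'a::complex_inner) = - cinner x y"
proof -
  have "cinner x y + cinner x (- y) = 0" by (subst cinner_add_right[symmetric]) simp
  then show ?thesis by (rule minus_unique[symmetric])
qed

lemma cinner_diff_left: "cinner (x - y) (z::'a::complex_inner) = cinner x z - cinner y z"
  by (simp only: diff_conv_add_uminus cinner_add_left cinner_minus_left)

lemma cinner_diff_right: "cinner x (y - z::'a::complex_inner) = cinner x y - cinner x z"
  by (simp only: diff_conv_add_uminus cinner_add_right cinner_minus_right)

lemma cinner_scaleR_left: "cinner (r *\<^sub>R x) (y::'a::complex_inner) = of_real r * cinner x y"
  by (simp add: scaleR_scaleC cinner_scaleC_left)

lemma cinner_scaleR_right: "cinner x (r *\<^sub>R y::'a::complex_inner) = of_real r * cinner x y"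
  by (simp add: scaleR_scaleC cinner_scaleC_right)

lemma cinner_sum_left: "cinner (\<Sum>i\<in>I. f i) (y::'a::complex_inner) = (\<Sum>i\<in>I. cinner (f i) y)"
  by (induction I rule: infinite_finite_induct) (auto simp: cinner_add_left)

lemma cinner_sum_right: "cinner y (\<Sum>i\<in>I. f i::'a::complex_inner) = (\<Sum>i\<in>I. cinner y (f i))"
  by (induction I rule: infinite_finite_induct) (auto simp: cinner_add_right)

lemma cinner_self_Im: "Im (cinner x (x::'a::complex_inner)) = 0"
proof -
  have "Im (cinner x x) = Im (cnj (cinner x x))" by (subst cinner_commute) simp
  then show ?thesis by simp
qed

lemma cinner_self_Re: "Re (cinner x (x::'a::complex_inner)) = (norm x)\<^sup>2"
  by (simp add: norm_eq_sqrt_cinner cinner_ge_zero)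

lemma cinner_self: "cinner x (x::'a::complex_inner) = complex_of_real ((norm x)\<^sup>2)"
  by (simp add: complex_eq_iff cinner_self_Im cinner_self_Re)

lemma norm_scaleC: "norm (c *\<^sub>C x) = cmod c * norm (x::'a::complex_inner)"
proof -
  have "(norm (c *\<^sub>C x))\<^sup>2 = Re (cinner (c *\<^sub>C x) (c *\<^sub>C x))" by (simp add: cinner_self_Re)
  also have "\<dots> = Re (cnj c * c * cinner x x)"
    by (simp only: cinner_scaleC_left cinner_scaleC_right mult.assoc mult.left_commute)
  also have "cnj c * c = of_real ((cmod c)\<^sup>2)"
    by (metis complex_norm_square mult.commute of_real_power)
  also have "Re (of_real ((cmod c)\<^sup>2) * cinner x x) = (cmod c * norm x)\<^sup>2"
    by (simp add: cinner_self_Re power_mult_distrib)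
  finally show ?thesis by (simp add: power2_eq_iff_nonneg)
qed

lemma cauchy_schwarz: "cmod (cinner x y) \<le> norm x * norm (y::'a::complex_inner)"
proof (cases "y = 0")
  case True then show ?thesis by simp
next
  case False
  define r where "r = (norm y)\<^sup>2"
  have r: "r > 0" using False by (simp add: r_def)
  define c where "c = cinner y x / of_real r"
  define z where "z = x - c *\<^sub>C y"
  define a where "a = cinner y x"
  have ca: "cnj a * a = of_real ((cmod a)\<^sup>2)" by (metis complex_norm_square mult.commute of_real_power)
  have "cinner z z = cinner x x - cnj c * cinner y x - c * cinner x y + cnj c * c * cinner y y"
    by (simp add: z_def cinner_diff_left cinner_diff_right cinner_scaleC_left cinner_scaleC_right algebra_simps)
  also have "cinner x y = cnj a" unfolding a_def by (rule cinner_commute)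
  also have "cinner y y = of_real r" by (simp add: cinner_self r_def)
  also have "cinner x x - cnj c * cinner y x - c * cnj a + cnj c * c * of_real r
      = cinner x x - cnj a * a / of_real r"
    using r by (simp add: c_def a_def field_simps)
  finally have eq: "cinner z z = cinner x x - of_real ((cmod a)\<^sup>2) / of_real r"
    by (simp only: ca)
  have "0 \<le> Re (cinner z z)" by (rule cinner_ge_zero)
  then have "(cmod a)\<^sup>2 / r \<le> (norm x)\<^sup>2" by (simp add: eq cinner_self_Re)
  then have "(cmod (cinner y x))\<^sup>2 \<le> (norm x)\<^sup>2 * r" using r by (simp add: field_simps a_def)
  then have "(cmod (cinner x y))\<^sup>2 \<le> (norm x * norm y)\<^sup>2"
    by (metis cinner_commute complex_mod_cnj power_mult_distrib r_def)
  then show ?thesis by (simp add: power2_le_iff_abs_le)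
qed

lemma cinner_eqI: "(\<And>x. cinner x y = cinner x z) \<Longrightarrow> y = (z::'a::complex_inner)"
  by (metis cinner_diff_right cinner_eq_zero_iff right_minus_eq)

lemma bounded_bilinear_cinner: "bounded_bilinear (cinner :: 'a::complex_inner \<Rightarrow> 'a \<Rightarrow> complex)"
proof
  show "\<exists>K. \<forall>a b::'a. norm (cinner a b) \<le> norm a * norm b * K"
    by (rule exI[of _ 1]) (simp add: cauchy_schwarz)
qed (simp_all add: cinner_add_left cinner_add_right cinner_scaleR_left cinner_scaleR_right scaleR_conv_of_real)

lemmas tendsto_cinner [tendsto_intros] = bounded_bilinear.tendsto[OF bounded_bilinear_cinner]

lemma norm_scaleC_ii: "norm (\<i> *\<^sub>C x) = norm (x::'a::complex_inner)"
  by (simp add: norm_scaleC)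


instance chilbert_space \<subseteq> banach ..

lemma bclin_add: "bounded_clinear T \<Longrightarrow> T (x + y) = T x + T y"
  by (simp add: bounded_clinear_def clinear_def)

lemma bclin_scaleC: "bounded_clinear T \<Longrightarrow> T (c *\<^sub>C x) = c *\<^sub>C T x"
  by (simp add: bounded_clinear_def clinear_def)

lemma bclin_scaleR: "bounded_clinear T \<Longrightarrow> T (r *\<^sub>R x) = r *\<^sub>R T x"
  by (simp add: scaleR_scaleC bclin_scaleC)

lemma bclin_bounded_linear: "bounded_clinear T \<Longrightarrow> bounded_linear T"
proof -
  assume T: "bounded_clinear T"
  then obtain K where K: "\<forall>x. norm (T x) \<le> norm x * K" by (auto simp: bounded_clinear_def)
  show ?thesis by (rule bounded_linear_intro[where K=K]) (simp_all add: bclin_add bclin_scaleR K T)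
qed

lemma bclin_zero: "bounded_clinear T \<Longrightarrow> T 0 = 0"
  using bclin_bounded_linear linear_simps(3) bounded_linear.linear by blast

lemma bclin_minus: "bounded_clinear T \<Longrightarrow> T (- x) = - T x"
  by (meson bclin_bounded_linear bounded_linear.linear linear_simps(4))

lemma bclin_diff: "bounded_clinear T \<Longrightarrow> T (x - y) = T x - T y"
  by (meson bclin_bounded_linear bounded_linear.linear linear_simps(2))

lemma bclin_sum: "bounded_clinear T \<Longrightarrow> T (\<Sum>i\<in>I. f i) = (\<Sum>i\<in>I. T (f i))"
  by (induction I rule: infinite_finite_induct) (auto simp: bclin_add bclin_zero)

lemma bclin_norm: "bounded_clinear T \<Longrightarrow> norm (T x) \<le> onorm T * norm x"
  by (simp add: bclin_bounded_linear onorm)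

lemma bclin_onorm_nonneg: "bounded_clinear T \<Longrightarrow> 0 \<le> onorm T"
  by (simp add: bclin_bounded_linear onorm_pos_le)

lemma bclin_intro:
  assumes "\<And>x y. T (x + y) = T x + T y" "\<And>c x. T (c *\<^sub>C x) = c *\<^sub>C T x" "\<And>x. norm (T x) \<le> norm x * K"
  shows "bounded_clinear T"
  using assms unfolding bounded_clinear_def clinear_def by blast

lemma bclin_comp: "bounded_clinear T \<Longrightarrow> bounded_clinear U \<Longrightarrow> bounded_clinear (\<lambda>x. T (U x))"
  apply (rule bclin_intro[where K="onorm U * onorm T"])
    apply (simp add: bclin_add)
   apply (simp add: bclin_scaleC)
  by (metis (no_types, opaque_lifting) bclin_norm bclin_onorm_nonneg dual_order.trans mult.commute
      mult.left_commute mult_left_mono)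

lemma bclin_comp': "bounded_clinear T \<Longrightarrow> bounded_clinear U \<Longrightarrow> bounded_clinear (T \<circ> U)"
  using bclin_comp[of T U] by (simp add: comp_def)

lemma bclin_id: "bounded_clinear (\<lambda>x. x)"
  by (rule bclin_intro[where K=1]) auto

lemma bclin_id': "bounded_clinear id"
  using bclin_id by (simp add: id_def)

lemma bclin_diff_op: "bounded_clinear T \<Longrightarrow> bounded_clinear U \<Longrightarrow> bounded_clinear (\<lambda>x. T x - U x)"
  apply (rule bclin_intro[where K="onorm T + onorm U"])
    apply (simp add: bclin_add)
   apply (simp add: bclin_scaleC scaleC_diff_right)
proof -
  fix x assume T: "bounded_clinear T" and U: "bounded_clinear U"
  have "norm (T x - U x) \<le> norm (T x) + norm (U x)" by (rule norm_triangle_ineq4)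
  also have "\<dots> \<le> onorm T * norm x + onorm U * norm x" using bclin_norm[OF T] bclin_norm[OF U] by (rule add_mono)
  finally show "norm (T x - U x) \<le> norm x * (onorm T + onorm U)" by (simp add: algebra_simps)
qed

lemma bclin_add_op: "bounded_clinear T \<Longrightarrow> bounded_clinear U \<Longrightarrow> bounded_clinear (\<lambda>x. T x + U x)"
  apply (rule bclin_intro[where K="onorm T + onorm U"])
    apply (simp add: bclin_add)
   apply (simp add: bclin_scaleC scaleC_add_right)
proof -
  fix x assume T: "bounded_clinear T" and U: "bounded_clinear U"
  have "norm (T x + U x) \<le> norm (T x) + norm (U x)" by (rule norm_triangle_ineq)
  also have "\<dots> \<le> onorm T * norm x + onorm U * norm x" using bclin_norm[OF T] bclin_norm[OF U] by (rule add_mono)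
  finally show "norm (T x + U x) \<le> norm x * (onorm T + onorm U)" by (simp add: algebra_simps)
qed

lemma bclin_continuous: "bounded_clinear T \<Longrightarrow> continuous_on S T"
  by (simp add: bclin_bounded_linear linear_continuous_on)

lemma bclin_tendsto: "bounded_clinear T \<Longrightarrow> (f \<longlongrightarrow> l) F \<Longrightarrow> ((\<lambda>x. T (f x)) \<longlongrightarrow> T l) F"
  using bclin_bounded_linear bounded_linear.tendsto by blast

section \<open>Parallelogram, projection, Riesz\<close>

lemma norm_sq_diff: "(norm (x - y))\<^sup>2 = (norm x)\<^sup>2 + (norm y)\<^sup>2 - 2 * Re (cinner x (y::'a::complex_inner))"
proof -
  have "(norm (x - y))\<^sup>2 = Re (cinner (x - y) (x - y))" by (simp add: cinner_self_Re)
  also have "\<dots> = Re (cinner x x) + Re (cinner y y) - Re (cinner x y) - Re (cinner y x)"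
    by (simp add: cinner_diff_left cinner_diff_right)
  also have "Re (cinner y x) = Re (cinner x y)" by (subst cinner_commute) simp
  finally show ?thesis by (simp add: cinner_self_Re)
qed

lemma norm_sq_add: "(norm (x + y))\<^sup>2 = (norm x)\<^sup>2 + (norm y)\<^sup>2 + 2 * Re (cinner x (y::'a::complex_inner))"
  using norm_sq_diff[of x "-y"] by (simp add: cinner_minus_right)

lemma parallelogram: "(norm (x - y))\<^sup>2 + (norm (x + y))\<^sup>2 = 2 * (norm x)\<^sup>2 + 2 * (norm (y::'a::complex_inner))\<^sup>2"
  by (simp add: norm_sq_diff norm_sq_add)

lemma proj_sq_formula:
  fixes u v :: "'a::complex_inner"
  assumes "v \<noteq> 0"
  defines "c \<equiv> cinner v u / of_real ((norm v)\<^sup>2)"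
  shows "(norm (u - c *\<^sub>C v))\<^sup>2 = (norm u)\<^sup>2 - (cmod (cinner v u))\<^sup>2 / (norm v)\<^sup>2"
proof -
  define r where "r = (norm v)\<^sup>2"
  have r: "r > 0" using assms by (simp add: r_def)
  define a where "a = cinner v u"
  have ca: "cnj a * a = of_real ((cmod a)\<^sup>2)" by (metis complex_norm_square mult.commute of_real_power)
  have "cinner (u - c *\<^sub>C v) (u - c *\<^sub>C v) = cinner u u - cnj c * cinner v u - c * cinner u v + cnj c * c * cinner v v"
    by (simp add: cinner_diff_left cinner_diff_right cinner_scaleC_left cinner_scaleC_right algebra_simps)
  also have "cinner u v = cnj a" unfolding a_def by (rule cinner_commute)
  also have "cinner v v = of_real r" by (simp add: cinner_self r_def)
  also have "cinner u u - cnj c * cinner v u - c * cnj a + cnj c * c * of_real r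
      = cinner u u - cnj a * a / of_real r"
    using r by (simp add: c_def a_def r_def[symmetric] field_simps)
  finally have eq: "cinner (u - c *\<^sub>C v) (u - c *\<^sub>C v) = cinner u u - of_real ((cmod a)\<^sup>2) / of_real r"
    by (simp only: ca)
  have "(norm (u - c *\<^sub>C v))\<^sup>2 = Re (cinner (u - c *\<^sub>C v) (u - c *\<^sub>C v))" by (simp add: cinner_self_Re)
  also have "\<dots> = (norm u)\<^sup>2 - (cmod a)\<^sup>2 / r" by (simp add: eq cinner_self_Re)
  finally show ?thesis by (simp add: a_def r_def)
qed

lemma orth_from_min:
  fixes u v :: "'a::complex_inner"
  assumes "\<And>c. norm u \<le> norm (u - c *\<^sub>C v)"
  shows "cinner v u = 0"
proof (cases "v = 0")
  case True then show ?thesis by simp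
next
  case False
  define c where "c = cinner v u / of_real ((norm v)\<^sup>2)"
  have "(norm u)\<^sup>2 \<le> (norm (u - c *\<^sub>C v))\<^sup>2" using assms[of c] by (simp add: power_mono)
  also have "\<dots> = (norm u)\<^sup>2 - (cmod (cinner v u))\<^sup>2 / (norm v)\<^sup>2"
    using proj_sq_formula[OF False] by (simp add: c_def)
  finally have "(cmod (cinner v u))\<^sup>2 / (norm v)\<^sup>2 \<le> 0" by simp
  moreover have "(norm v)\<^sup>2 > 0" using False by simp
  ultimately have "(cmod (cinner v u))\<^sup>2 \<le> 0" by (simp add: divide_le_0_iff)
  then show ?thesis by simp
qed

definition csubspace :: "'a::complex_vector set \<Rightarrow> bool" where
  "csubspace L \<longleftrightarrow> 0 \<in> L \<and> (\<forall>x\<in>L. \<forall>y\<in>L. x + y \<in> L) \<and> (\<forall>c. \<forall>x\<in>L. c *\<^sub>C x \<in> L)"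

lemma projection_exists:
  fixes L :: "'a::chilbert_space set"
  assumes L: "csubspace L" "closed L"
  shows "\<exists>p\<in>L. \<forall>v\<in>L. cinner v (x - p) = 0"
proof -
  have L0: "0 \<in> L" and Ladd: "\<And>a b. a \<in> L \<Longrightarrow> b \<in> L \<Longrightarrow> a + b \<in> L"
    and Lsc: "\<And>c a. a \<in> L \<Longrightarrow> c *\<^sub>C a \<in> L" using L by (auto simp: csubspace_def)
  have LR: "\<And>r a. a \<in> L \<Longrightarrow> r *\<^sub>R a \<in> L" by (simp add: scaleR_scaleC Lsc)
  have Lminus: "\<And>a b. a \<in> L \<Longrightarrow> b \<in> L \<Longrightarrow> a - b \<in> L"
    using Ladd LR[of _ "-1"] by (metis diff_conv_add_uminus scaleR_minus1_left)
  define D where "D = (\<lambda>v. (norm (x - v))\<^sup>2) ` L"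
  define d where "d = Inf D"
  have Dne: "D \<noteq> {}" using L0 by (auto simp: D_def)
  have Dbdd: "bdd_below D" by (auto simp: D_def intro!: bdd_belowI[of _ 0])
  have dle: "\<And>v. v \<in> L \<Longrightarrow> d \<le> (norm (x - v))\<^sup>2"
    using Dbdd unfolding d_def D_def by (auto intro: cInf_lower)
  have "\<forall>n. \<exists>v\<in>L. (norm (x - v))\<^sup>2 < d + 1 / (Suc n)"
  proof
    fix n
    have "Inf D < d + 1 / Suc n" by (simp add: d_def)
    then obtain y where "y \<in> D" "y < d + 1 / Suc n" using cInf_lessD[OF Dne] by blast
    then show "\<exists>v\<in>L. (norm (x - v))\<^sup>2 < d + 1 / (Suc n)" by (auto simp: D_def)
  qed
  then obtain v where vL: "\<And>n. v n \<in> L" and vd: "\<And>n. (norm (x - v n))\<^sup>2 < d + 1 / Suc n"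
    by metis
  have key: "(norm (v m - v n))\<^sup>2 \<le> 2 / Suc m + 2 / Suc n" for m n
  proof -
    have mid: "(1/2) *\<^sub>R (v m + v n) \<in> L" using vL by (simp add: Ladd LR)
    have h: "(1/2) *\<^sub>R x + (1/2) *\<^sub>R x = x" by (simp flip: scaleR_add_left)
    have "x - (1/2) *\<^sub>R (v m + v n) = (1/2) *\<^sub>R ((x - v m) + (x - v n))"
      using h by (simp add: algebra_simps)
    then have "(norm ((x - v m) + (x - v n)))\<^sup>2 = 4 * (norm (x - (1/2) *\<^sub>R (v m + v n)))\<^sup>2"
      by (simp add: power2_eq_square)
    also have "\<dots> \<ge> 4 * d" using dle[OF mid] by simp
    finally have "(norm ((x - v m) + (x - v n)))\<^sup>2 \<ge> 4 * d" .
    moreover have "(norm ((x - v n) - (x - v m)))\<^sup>2 + (norm ((x - v n) + (x - v m)))\<^sup>2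
        = 2 * (norm (x - v n))\<^sup>2 + 2 * (norm (x - v m))\<^sup>2" by (rule parallelogram)
    moreover have "(x - v n) - (x - v m) = v m - v n" by simp
    moreover have "(x - v n) + (x - v m) = (x - v m) + (x - v n)" by simp
    ultimately show ?thesis using vd[of m] vd[of n] by auto
  qed
  have "Cauchy v"
  proof (rule CauchyI)
    fix e :: real assume e: "e > 0"
    obtain N :: nat where N: "4 / e\<^sup>2 < N" using reals_Archimedean2 by blast
    have Npos: "N > 0" using N e by (metis gr0I less_numeral_extra(3) of_nat_0 of_nat_0_less_iff order.strict_trans zero_less_divide_iff zero_less_numeral zero_less_power)
    show "\<exists>M. \<forall>m\<ge>M. \<forall>n\<ge>M. norm (v m - v n) < e"
    proof (intro exI allI impI)
      fix m n assume mn: "N \<le> m" "N \<le> n"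
      have "2 / Suc m \<le> 2 / N" using mn Npos by (simp add: frac_le)
      moreover have "2 / Suc n \<le> 2 / N" using mn Npos by (simp add: frac_le)
      moreover have "4 / N < e\<^sup>2" using N e Npos by (simp add: field_simps)
      ultimately have "(norm (v m - v n))\<^sup>2 < e\<^sup>2" using key[of m n] by simp
      then show "norm (v m - v n) < e" using e by (simp add: power_less_imp_less_base)
    qed
  qed
  then obtain p where vp: "v \<longlonglongrightarrow> p" using Cauchy_convergent convergent_def by blast
  have pL: "p \<in> L" using L(2) vL vp closed_sequentially by blast
  have lim1: "(\<lambda>n. (norm (x - v n))\<^sup>2) \<longlonglongrightarrow> (norm (x - p))\<^sup>2"
    by (intro tendsto_intros vp)
  have lim2: "(\<lambda>n. (norm (x - v n))\<^sup>2) \<longlonglongrightarrow> d"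
  proof (rule real_tendsto_sandwich[where f="\<lambda>n. d" and h="\<lambda>n. d + 1 / Suc n"])
    show "\<forall>\<^sub>F n in sequentially. d \<le> (norm (x - v n))\<^sup>2" using dle vL by auto
    show "\<forall>\<^sub>F n in sequentially. (norm (x - v n))\<^sup>2 \<le> d + 1 / Suc n" using vd by (intro always_eventually allI less_imp_le) auto
    show "(\<lambda>n. d) \<longlonglongrightarrow> d" by simp
    show "(\<lambda>n. d + 1 / Suc n) \<longlonglongrightarrow> d"
      using tendsto_add[OF tendsto_const[of d] LIMSEQ_Suc[OF lim_const_over_n[of 1]]] by simp
  qed
  have pd: "(norm (x - p))\<^sup>2 = d" using LIMSEQ_unique lim1 lim2 by blast
  show ?thesis
  proof (intro bexI[OF _ pL] ballI)
    fix w assume w: "w \<in> L"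
    show "cinner w (x - p) = 0"
    proof (rule orth_from_min)
      fix c
      have "p + c *\<^sub>C w \<in> L" using pL w by (simp add: Ladd Lsc)
      then have "(norm (x - p))\<^sup>2 \<le> (norm (x - (p + c *\<^sub>C w)))\<^sup>2" using dle pd by simp
      then have "norm (x - p) \<le> norm (x - (p + c *\<^sub>C w))" by (simp add: power2_le_iff_abs_le)
      then show "norm (x - p) \<le> norm (x - p - c *\<^sub>C w)" by (simp add: diff_diff_add)
    qed
  qed
qed

lemma riesz:
  fixes f :: "'a::chilbert_space \<Rightarrow> complex"
  assumes add: "\<And>x y. f (x + y) = f x + f y" and sc: "\<And>c x. f (c *\<^sub>C x) = c * f x"
    and bnd: "\<And>x. cmod (f x) \<le> norm x * K"
  shows "\<exists>z. \<forall>x. f x = cinner z x"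
proof (cases "\<forall>x. f x = 0")
  case True then show ?thesis by (intro exI[of _ 0]) simp
next
  case False
  then obtain x0 where x0: "f x0 \<noteq> 0" by blast
  have bl: "bounded_linear f"
    by (rule bounded_linear_intro[where K=K]) (auto simp: add scaleR_scaleC sc bnd scaleR_conv_of_real scaleC_complex_def)
  define L where "L = {x. f x = 0}"
  have f0: "f 0 = 0" using add[of 0 0] by simp
  have "csubspace L" by (auto simp: L_def csubspace_def add sc f0)
  moreover have "closed L" unfolding L_def
    by (rule closed_Collect_eq) (auto intro: linear_continuous_on bl)
  ultimately obtain p where pL: "p \<in> L" and orth: "\<And>v. v \<in> L \<Longrightarrow> cinner v (x0 - p) = 0"
    using projection_exists by blast
  define u where "u = x0 - p"
  have fu: "f u = f x0" using pL add[of "x0 - p" p] by (simp add: L_def u_def)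
  have fminus: "\<And>a b. f (a - b) = f a - f b" using add by (metis add_diff_cancel eq_diff_eq)
  have u0: "u \<noteq> 0" using fu x0 f0 by auto
  have uu: "cinner u u \<noteq> 0" using u0 by (simp add: cinner_eq_zero_iff)
  show ?thesis
  proof (intro exI allI)
    fix x
    have "x - (f x / f u) *\<^sub>C u \<in> L" using x0 fu by (simp add: L_def fminus sc)
    then have "cinner (x - (f x / f u) *\<^sub>C u) u = 0" using orth by (simp add: u_def)
    then have "cinner x u = cnj (f x / f u) * cinner u u"
      by (simp add: cinner_diff_left cinner_scaleC_left)
    then have "cnj (cinner x u) = (f x / f u) * cnj (cinner u u)" by simp
    then have "cinner u x = (f x / f u) * cinner u u"
      by (metis cinner_commute)
    then have "f x = (f u / cinner u u) * cinner u x" using uu x0 fu by (simp add: field_simps)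
    then show "f x = cinner (cnj (f u / cinner u u) *\<^sub>C u) x" by (simp add: cinner_scaleC_left)
  qed
qed

section \<open>Adjoint\<close>

lemma adjoint_exists:
  fixes T :: "'a::chilbert_space \<Rightarrow> 'a"
  assumes T: "bounded_clinear T"
  shows "\<exists>z. \<forall>x. cinner (T x) y = cinner x z"
proof -
  have "\<exists>w. \<forall>x. cinner y (T x) = cinner w x"
  proof (rule riesz[where K="norm y * onorm T"])
    show "cinner y (T (x1 + x2)) = cinner y (T x1) + cinner y (T x2)" for x1 x2
      by (simp add: bclin_add[OF T] cinner_add_right)
    show "cinner y (T (c *\<^sub>C x)) = c * cinner y (T x)" for c x
      by (simp add: bclin_scaleC[OF T] cinner_scaleC_right)
    show "cmod (cinner y (T x)) \<le> norm x * (norm y * onorm T)" for x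
    proof -
      have "cmod (cinner y (T x)) \<le> norm y * norm (T x)" by (rule cauchy_schwarz)
      also have "\<dots> \<le> norm y * (onorm T * norm x)" by (simp add: bclin_norm[OF T] mult_left_mono)
      finally show ?thesis by (simp add: algebra_simps)
    qed
  qed
  then obtain w where "\<And>x. cinner y (T x) = cinner w x" by blast
  then have "\<And>x. cinner (T x) y = cinner x w" by (metis cinner_commute)
  then show ?thesis by blast
qed

lemma cadjoint_eq:
  fixes T :: "'a::chilbert_space \<Rightarrow> 'a"
  assumes T: "bounded_clinear T"
  shows "cinner (T x) y = cinner x (cadjoint T y)"
proof -
  obtain z where z: "\<forall>x. cinner (T x) y = cinner x z" using adjoint_exists[OF T] by blast
  have "\<exists>!z. \<forall>x. cinner (T x) y = cinner x z"
  proof (rule ex1I[of _ z])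
    show "\<forall>x. cinner (T x) y = cinner x z" by (rule z)
    fix w assume w: "\<forall>x. cinner (T x) y = cinner x w"
    show "w = z" by (rule cinner_eqI) (simp add: w[rule_format, symmetric] z)
  qed
  then have "\<forall>x. cinner (T x) y = cinner x (THE z. \<forall>x. cinner (T x) y = cinner x z)"
    by (rule theI')
  then show ?thesis unfolding cadjoint_def by blast
qed

lemma cadjoint_eq':
  fixes T :: "'a::chilbert_space \<Rightarrow> 'a"
  assumes T: "bounded_clinear T"
  shows "cinner (cadjoint T y) x = cinner y (T x)"
proof -
  have "cinner (cadjoint T y) x = cnj (cinner x (cadjoint T y))" by (rule cinner_commute)
  also have "\<dots> = cnj (cinner (T x) y)" by (simp add: cadjoint_eq[OF T])
  also have "\<dots> = cinner y (T x)" by (subst cinner_commute[of y]) simp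
  finally show ?thesis .
qed

lemma cadjoint_unique:
  fixes T :: "'a::chilbert_space \<Rightarrow> 'a"
  assumes T: "bounded_clinear T" and z: "\<And>x. cinner (T x) y = cinner x z"
  shows "cadjoint T y = z"
  by (rule cinner_eqI) (simp add: cadjoint_eq[OF T, symmetric] z)

lemma cadjoint_norm:
  fixes T :: "'a::chilbert_space \<Rightarrow> 'a"
  assumes T: "bounded_clinear T"
  shows "norm (cadjoint T y) \<le> onorm T * norm y"
proof -
  let ?z = "cadjoint T y"
  have "(norm ?z)\<^sup>2 = Re (cinner ?z ?z)" by (simp add: cinner_self_Re)
  also have "\<dots> = Re (cinner (T ?z) y)" by (simp add: cadjoint_eq[OF T])
  also have "\<dots> \<le> cmod (cinner (T ?z) y)" by (rule complex_Re_le_cmod)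
  also have "\<dots> \<le> norm (T ?z) * norm y" by (rule cauchy_schwarz)
  also have "\<dots> \<le> onorm T * norm ?z * norm y" by (simp add: bclin_norm[OF T] mult_right_mono)
  finally have "norm ?z * norm ?z \<le> (onorm T * norm y) * norm ?z" by (simp add: power2_eq_square algebra_simps)
  then show ?thesis
    by (cases "norm ?z = 0") (auto simp: bclin_onorm_nonneg[OF T])
qed

lemma cadjoint_bclin:
  fixes T :: "'a::chilbert_space \<Rightarrow> 'a"
  assumes T: "bounded_clinear T"
  shows "bounded_clinear (cadjoint T)"
proof (rule bclin_intro[where K="onorm T"])
  show "cadjoint T (x + y) = cadjoint T x + cadjoint T y" for x y
    by (rule cadjoint_unique[OF T]) (simp add: cinner_add_right cadjoint_eq[OF T])
  show "cadjoint T (c *\<^sub>C x) = c *\<^sub>C cadjoint T x" for c x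
    by (rule cadjoint_unique[OF T]) (simp add: cinner_scaleC_right cadjoint_eq[OF T])
  show "norm (cadjoint T x) \<le> norm x * onorm T" for x
    using cadjoint_norm[OF T] by (simp add: mult.commute)
qed

lemma cadjoint_comp:
  fixes T U :: "'a::chilbert_space \<Rightarrow> 'a"
  assumes T: "bounded_clinear T" and U: "bounded_clinear U"
  shows "cadjoint (T \<circ> U) y = cadjoint U (cadjoint T y)"
  by (rule cadjoint_unique[OF bclin_comp'[OF T U]]) (simp add: cadjoint_eq[OF T] cadjoint_eq[OF U])

lemma cadjoint_id: "cadjoint (id::'a::chilbert_space \<Rightarrow> 'a) y = y"
  by (rule cadjoint_unique[OF bclin_id']) simp

lemma cadjoint_symmetric:
  fixes T :: "'a::chilbert_space \<Rightarrow> 'a"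
  assumes "symmetric_op T"
  shows "cadjoint T y = T y"
  using assms unfolding symmetric_op_def by (metis cadjoint_unique)


lemma bounded_linear_scaleC: "bounded_linear (\<lambda>x::'a::complex_inner. c *\<^sub>C x)"
  by (rule bounded_linear_intro[where K="cmod c"])
     (auto simp: scaleC_add_right scaleC_scaleR_commute norm_scaleC mult.commute)

lemma tendsto_scaleC: "(f \<longlongrightarrow> l) F \<Longrightarrow> ((\<lambda>x. c *\<^sub>C f x) \<longlongrightarrow> c *\<^sub>C (l::'a::complex_inner)) F"
  using bounded_linear.tendsto[OF bounded_linear_scaleC] by blast

lemma avg_right:
  fixes k :: "real \<Rightarrow> 'a::banach"
  assumes cont: "continuous_on {a..b} k" and ab: "a < b"
  shows "((\<lambda>d. (1/d) *\<^sub>R integral {a..a+d} k) \<longlongrightarrow> k a) (at_right 0)"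
proof (rule tendstoI)
  fix e :: real assume e: "e > 0"
  obtain d where d: "d > 0" and dk: "\<And>s. s \<in> {a..b} \<Longrightarrow> dist s a < d \<Longrightarrow> dist (k s) (k a) < e/2"
    using cont ab e unfolding continuous_on_iff
    by (metis atLeastAtMost_iff half_gt_zero less_eq_real_def order_refl)
  show "\<forall>\<^sub>F x in at_right 0. dist ((1 / x) *\<^sub>R integral {a..a + x} k) (k a) < e"
    unfolding eventually_at_right_field
  proof (intro exI[of _ "min d (b - a)"] conjI allI impI)
    show "0 < min d (b - a)" using d ab by simp
    fix h :: real assume h: "0 < h" "h < min d (b - a)"
    have sub: "{a..a+h} \<subseteq> {a..b}" using h by auto
    have int: "k integrable_on {a..a+h}"
      by (rule integrable_continuous_interval) (rule continuous_on_subset[OF cont sub])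
    have "integral {a..a+h} (\<lambda>s. k s - k a) = integral {a..a+h} k - integral {a..a+h} (\<lambda>s. k a)"
      by (rule Henstock_Kurzweil_Integration.integral_diff[OF int]) auto
    also have "integral {a..a+h} (\<lambda>s. k a) = h *\<^sub>R k a" using h by simp
    finally have "integral {a..a+h} (\<lambda>s. k s - k a) = integral {a..a+h} k - h *\<^sub>R k a" .
    moreover have "norm (integral {a..a+h} (\<lambda>s. k s - k a)) \<le> e/2 * Henstock_Kurzweil_Integration.content (cbox a (a+h))"
    proof (rule has_integral_bound)
      show "0 \<le> e/2" using e by simp
      show "((\<lambda>s. k s - k a) has_integral integral {a..a + h} (\<lambda>s. k s - k a)) (cbox a (a + h))"
        unfolding cbox_interval by (intro integrable_integral integrable_diff int) auto
      fix s assume "s \<in> cbox a (a+h)"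
      then have "s \<in> {a..b}" "dist s a < d" using h sub by (auto simp: cbox_interval dist_real_def)
      then show "norm (k s - k a) \<le> e/2" using dk[of s] by (simp add: dist_norm)
    qed
    ultimately have "norm (integral {a..a+h} k - h *\<^sub>R k a) \<le> e/2 * h" using h by simp
    then have n1: "norm (integral {a..a+h} k - h *\<^sub>R k a) / h \<le> e/2"
      using h by (simp add: divide_le_eq mult.commute)
    have "(1/h) *\<^sub>R integral {a..a+h} k - k a = (1/h) *\<^sub>R (integral {a..a+h} k - h *\<^sub>R k a)"
      using h by (simp add: scaleR_diff_right)
    then have "dist ((1 / h) *\<^sub>R integral {a..a + h} k) (k a) = norm (integral {a..a+h} k - h *\<^sub>R k a) / h"
      using h by (simp add: dist_norm)
    then show "dist ((1 / h) *\<^sub>R integral {a..a + h} k) (k a) < e"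
      using e n1 by linarith
  qed
qed

lemma right_deriv_zero_const:
  fixes p :: "real \<Rightarrow> 'a::real_normed_vector"
  assumes cont: "continuous_on {0..T} p"
    and der: "\<And>t. 0 \<le> t \<Longrightarrow> t < T \<Longrightarrow> ((\<lambda>h. (1/h) *\<^sub>R (p (t+h) - p t)) \<longlongrightarrow> 0) (at_right 0)"
    and T: "0 \<le> T"
  shows "p T = p 0"
proof -
  have bound: "norm (p T - p 0) \<le> e * T" if e: "e > 0" for e
  proof -
    define A where "A = {s\<in>{0..T}. norm (p s - p 0) \<le> e * s}"
    have A0: "0 \<in> A" using T by (simp add: A_def)
    have Abdd: "bdd_above A" by (auto simp: A_def intro!: bdd_aboveI[of _ T])
    have contT: "continuous_on {0..T} (\<lambda>s. norm (p s - p 0) - e * s)"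
      by (intro continuous_intros continuous_on_subset[OF cont]) auto
    have "A = {0..T} \<inter> (\<lambda>s. norm (p s - p 0) - e * s) -` {..0}"
      by (auto simp: A_def)
    then have Acl: "closed A"
      using continuous_closed_preimage[OF contT closed_atLeastAtMost closed_atMost[of 0]] by simp
    define s0 where "s0 = Sup A"
    have s0A: "s0 \<in> A" unfolding s0_def using A0 Abdd Acl closed_contains_Sup by blast
    have s0T: "s0 \<le> T" using s0A by (simp add: A_def)
    have "s0 = T"
    proof (rule ccontr)
      assume "s0 \<noteq> T"
      then have lt: "s0 < T" using s0T by simp
      have s0pos: "0 \<le> s0" using s0A by (simp add: A_def)
      have "\<forall>\<^sub>F h in at_right 0. dist ((1/h) *\<^sub>R (p (s0+h) - p s0)) 0 < e"
        using der[OF s0pos lt] e tendstoD by blast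
      then obtain b where b: "b > 0" and bh: "\<And>h. 0 < h \<Longrightarrow> h < b \<Longrightarrow> norm ((1/h) *\<^sub>R (p (s0+h) - p s0)) < e"
        unfolding eventually_at_right_field by auto
      define h where "h = min b (T - s0) / 2"
      have h: "0 < h" "h < b" "s0 + h \<le> T" using b lt unfolding h_def min_def by (auto simp: field_simps)
      have "norm ((1/h) *\<^sub>R (p (s0+h) - p s0)) < e" using bh h by simp
      moreover have "norm ((1/h) *\<^sub>R (p (s0+h) - p s0)) = norm (p (s0+h) - p s0) / h"
        using h by simp
      ultimately have "norm (p (s0+h) - p s0) / h < e" by linarith
      then have "norm (p (s0+h) - p s0) < e * h" using h by (simp add: divide_less_eq)
      moreover have "norm (p s0 - p 0) \<le> e * s0" using s0A by (simp add: A_def)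
      moreover have "norm (p (s0+h) - p 0) \<le> norm (p (s0+h) - p s0) + norm (p s0 - p 0)"
        by (rule order_trans[OF _ norm_triangle_ineq]) simp
      ultimately have "norm (p (s0+h) - p 0) \<le> e * (s0 + h)" by (simp add: algebra_simps)
      then have "s0 + h \<in> A" using h s0pos by (simp add: A_def)
      then have "s0 + h \<le> s0" unfolding s0_def using Abdd by (rule cSup_upper)
      then show False using h by simp
    qed
    then show ?thesis using s0A by (simp add: A_def)
  qed
  show ?thesis
  proof (cases "T = 0")
    case True then show ?thesis by simp
  next
    case False
    then have Tpos: "T > 0" using T by simp
    have "norm (p T - p 0) \<le> 0"
    proof (rule ccontr)
      assume "\<not> norm (p T - p 0) \<le> 0"
      then have n: "norm (p T - p 0) > 0" by simp
      have "norm (p T - p 0) \<le> (norm (p T - p 0) / (2 * T)) * T"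
        using bound[of "norm (p T - p 0) / (2 * T)"] n Tpos by simp
      moreover have "(norm (p T - p 0) / (2 * T)) * T = norm (p T - p 0) / 2" using Tpos by simp
      ultimately show False using n by linarith
    qed
    then show ?thesis by simp
  qed
qed

definition good :: "(real \<Rightarrow> 'a::chilbert_space \<Rightarrow> 'a) \<Rightarrow> real \<Rightarrow> bool" where
  "good T K \<longleftrightarrow> 0 \<le> K \<and> (\<forall>t\<ge>0. bounded_clinear (T t)) \<and> (\<forall>t\<ge>0. \<forall>x. norm (T t x) \<le> K * norm x) \<and>
     (\<forall>t s x. 0 \<le> t \<longrightarrow> 0 \<le> s \<longrightarrow> T (t + s) x = T t (T s x)) \<and> (\<forall>x. ((\<lambda>h. T h x) \<longlongrightarrow> x) (at_right 0))"

lemma good_cont: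
  assumes g: "good T K" and t: "0 \<le> t"
  shows "((\<lambda>s. T s x) \<longlongrightarrow> T t x) (at t within {0..})"
proof (rule tendstoI)
  fix e :: real assume e: "e > 0"
  have K: "0 \<le> K" and bcl: "\<And>t. 0 \<le> t \<Longrightarrow> bounded_clinear (T t)"
    and nrm: "\<And>t x. 0 \<le> t \<Longrightarrow> norm (T t x) \<le> K * norm x"
    and sg: "\<And>t s x. 0 \<le> t \<Longrightarrow> 0 \<le> s \<Longrightarrow> T (t + s) x = T t (T s x)"
    and rc: "\<And>x. ((\<lambda>h. T h x) \<longlongrightarrow> x) (at_right 0)" using g by (auto simp: good_def)
  have e': "e / (K + 1) > 0" using e K by simp
  have "\<forall>\<^sub>F h in at_right 0. dist (T h x) x < e / (K + 1)" using rc e' tendstoD by blast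
  then obtain b where b: "b > 0" and bh: "\<And>h. 0 < h \<Longrightarrow> h < b \<Longrightarrow> norm (T h x - x) < e / (K + 1)"
    unfolding eventually_at_right_field by (auto simp: dist_norm)
  have Ke: "K * (e / (K + 1)) < e" using K e by (simp add: field_simps)
  show "\<forall>\<^sub>F s in at t within {0..}. dist (T s x) (T t x) < e"
    unfolding eventually_at
  proof (intro exI[of _ b] conjI ballI impI)
    show "b > 0" by (rule b)
    fix s :: real assume s: "s \<in> {0..}" and st: "s \<noteq> t \<and> dist s t < b"
    show "dist (T s x) (T t x) < e"
    proof (cases "t < s")
      case True
      have "T s x = T t (T (s - t) x)" using sg[of t "s - t" x] True t by simp
      then have "T s x - T t x = T t (T (s - t) x - x)" using bclin_diff[OF bcl[OF t]] by simp
      then have "norm (T s x - T t x) \<le> K * norm (T (s - t) x - x)" using nrm[OF t] by simp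
      also have "\<dots> \<le> K * (e / (K + 1))"
        using bh[of "s - t"] True st K by (intro mult_left_mono) (auto simp: dist_real_def)
      finally show ?thesis using Ke by (simp add: dist_norm)
    next
      case False
      then have lt: "s < t" using st by simp
      have s0: "0 \<le> s" using s by simp
      have "T t x = T s (T (t - s) x)" using sg[of s "t - s" x] lt s0 by simp
      then have "T s x - T t x = T s (x - T (t - s) x)" using bclin_diff[OF bcl[OF s0]] by simp
      then have "norm (T s x - T t x) \<le> K * norm (x - T (t - s) x)" using nrm[OF s0] by simp
      also have "\<dots> \<le> K * (e / (K + 1))"
        using bh[of "t - s"] lt st K by (intro mult_left_mono) (auto simp: dist_real_def norm_minus_commute)
      finally show ?thesis using Ke by (simp add: dist_norm)
    qed
  qed
qed

lemma good_tendsto: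
  assumes g: "good T K" and t: "0 \<le> t" and f: "(f \<longlongrightarrow> y) (at t within {0..})"
  shows "((\<lambda>s. T s (f s)) \<longlongrightarrow> T t y) (at t within {0..})"
proof -
  have K: "0 \<le> K" and bcl: "\<And>t. 0 \<le> t \<Longrightarrow> bounded_clinear (T t)"
    and nrm: "\<And>t x. 0 \<le> t \<Longrightarrow> norm (T t x) \<le> K * norm x" using g by (auto simp: good_def)
  have ev: "\<forall>\<^sub>F s in at t within {0..}. 0 \<le> s"
    by (auto simp: eventually_at_filter)
  have 1: "((\<lambda>s. T s (f s - y)) \<longlongrightarrow> 0) (at t within {0..})"
  proof (rule Lim_null_comparison)
    show "\<forall>\<^sub>F s in at t within {0..}. norm (T s (f s - y)) \<le> K * norm (f s - y)"
      using ev by eventually_elim (rule nrm)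
    have "((\<lambda>s. f s - y) \<longlongrightarrow> 0) (at t within {0..})" using f by (simp add: Lim_null[symmetric])
    then have "((\<lambda>s. norm (f s - y)) \<longlongrightarrow> 0) (at t within {0..})" by (simp add: tendsto_norm_zero)
    then show "((\<lambda>s. K * norm (f s - y)) \<longlongrightarrow> 0) (at t within {0..})"
      using tendsto_mult_right_zero by blast
  qed
  have "((\<lambda>s. T s (f s - y) + T s y) \<longlongrightarrow> 0 + T t y) (at t within {0..})"
    by (intro tendsto_add 1 good_cont[OF g t])
  then have "((\<lambda>s. T s (f s - y) + T s y) \<longlongrightarrow> T t y) (at t within {0..})" by simp
  moreover have "\<forall>\<^sub>F s in at t within {0..}. T s (f s - y) + T s y = T s (f s)"
    using ev by eventually_elim (simp add: bclin_diff[OF bcl])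
  ultimately show ?thesis by (rule Lim_transform_eventually)
qed

lemma good_cont_on:
  assumes g: "good T K" and f: "continuous_on {0..} f"
  shows "continuous_on {0..} (\<lambda>s. T s (f s))"
  unfolding continuous_on_def
proof
  fix t :: real assume t: "t \<in> {0..}"
  show "((\<lambda>s. T s (f s)) \<longlongrightarrow> T t (f t)) (at t within {0..})"
    using good_tendsto[OF g _ f[unfolded continuous_on_def, rule_format, OF t]] t by simp
qed

lemma good_cont_on_const:
  assumes g: "good T K"
  shows "continuous_on {0..} (\<lambda>s. T s x)"
  using good_cont_on[OF g continuous_on_const] by simp


lemma int_bound:
  fixes k :: "real \<Rightarrow> 'a::banach"
  assumes int: "k integrable_on {a..b}" and ab: "a \<le> b" and B: "\<And>s. s \<in> {a..b} \<Longrightarrow> norm (k s) \<le> B"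
  shows "norm (integral {a..b} k) \<le> B * (b - a)"
proof (cases "a = b")
  case True then show ?thesis by simp
next
  case False
  have B0: "0 \<le> B" using B[of a] ab by (meson atLeastAtMost_iff norm_ge_zero order.trans order_refl)
  have "norm (integral {a..b} k) \<le> B * Henstock_Kurzweil_Integration.content (cbox a b)"
    by (rule has_integral_bound[OF B0]) (use int B in \<open>auto simp: cbox_interval integrable_integral\<close>)
  then show ?thesis using ab by simp
qed

lemma cont_cinner:
  "continuous_on A f \<Longrightarrow> continuous_on A g \<Longrightarrow> continuous_on A (\<lambda>s. cinner (f s) (g s))"
  by (auto simp: continuous_on_def intro: tendsto_cinner)

locale sg =
  fixes S :: "real \<Rightarrow> 'h::chilbert_space \<Rightarrow> 'h" and M \<alpha> :: real
  assumes c0: "c0_semigroup S" and Mpos: "M > 0" and apos: "\<alpha> > 0"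
    and stab: "\<forall>t\<ge>0. onorm (S t) \<le> M * exp (- \<alpha> * t)"
begin

abbreviation Sa :: "real \<Rightarrow> 'h \<Rightarrow> 'h" where "Sa t \<equiv> cadjoint (S t)"

lemma S_bclin: "0 \<le> t \<Longrightarrow> bounded_clinear (S t)"
  using c0 by (simp add: c0_semigroup_def)

lemma S_0': "S 0 = id" using c0 by (simp add: c0_semigroup_def)

lemma S_0: "S 0 x = x" using S_0' by simp

lemma S_add: "0 \<le> t \<Longrightarrow> 0 \<le> s \<Longrightarrow> S (t + s) x = S t (S s x)"
  using c0 by (simp add: c0_semigroup_def)

lemma exp_le1: "0 \<le> t \<Longrightarrow> exp (- \<alpha> * t) \<le> 1"
  using apos by simp

lemma S_norm: "0 \<le> t \<Longrightarrow> norm (S t x) \<le> M * exp (- \<alpha> * t) * norm x"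
  by (meson S_bclin bclin_norm mult_right_mono norm_ge_zero order_trans stab)

lemma S_norm1: "0 \<le> t \<Longrightarrow> norm (S t x) \<le> M * norm x"
proof -
  assume t: "0 \<le> t"
  have "M * exp (- \<alpha> * t) \<le> M * 1" by (rule mult_left_mono[OF exp_le1[OF t]]) (use Mpos in simp)
  then have "M * exp (- \<alpha> * t) * norm x \<le> M * norm x" by (intro mult_right_mono) simp_all
  then show ?thesis using S_norm[OF t, of x] by linarith
qed

lemma S_right: "((\<lambda>h. S h x) \<longlongrightarrow> x) (at_right 0)"
  using c0 by (simp add: c0_semigroup_def)

lemma S_good: "good S M"
  unfolding good_def using Mpos S_bclin S_norm1 S_add S_right by auto

lemma Sa_bclin: "0 \<le> t \<Longrightarrow> bounded_clinear (Sa t)"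
  by (simp add: S_bclin cadjoint_bclin)

lemma Sa_norm: "0 \<le> t \<Longrightarrow> norm (Sa t y) \<le> M * exp (- \<alpha> * t) * norm y"
  by (meson S_bclin cadjoint_norm mult_right_mono norm_ge_zero order_trans stab)

lemma Sa_norm1: "0 \<le> t \<Longrightarrow> norm (Sa t x) \<le> M * norm x"
proof -
  assume t: "0 \<le> t"
  have "M * exp (- \<alpha> * t) \<le> M * 1" by (rule mult_left_mono[OF exp_le1[OF t]]) (use Mpos in simp)
  then have "M * exp (- \<alpha> * t) * norm x \<le> M * norm x" by (intro mult_right_mono) simp_all
  then show ?thesis using Sa_norm[OF t, of x] by linarith
qed

lemma Sa_0: "Sa 0 y = y" by (simp add: S_0' cadjoint_id)

lemma Sa_add: "0 \<le> t \<Longrightarrow> 0 \<le> s \<Longrightarrow> Sa (t + s) y = Sa t (Sa s y)"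
proof -
  assume t: "0 \<le> t" and s: "0 \<le> s"
  have "S (t + s) = S s \<circ> S t" using S_add[OF s t] by (auto simp: add.commute)
  then show ?thesis using cadjoint_comp[OF S_bclin[OF s] S_bclin[OF t]] by simp
qed

lemma Sa_inner1: "0 \<le> t \<Longrightarrow> cinner (S t x) y = cinner x (Sa t y)"
  by (simp add: S_bclin cadjoint_eq)

lemma Sa_inner2: "0 \<le> t \<Longrightarrow> cinner (Sa t y) x = cinner y (S t x)"
  by (simp add: S_bclin cadjoint_eq')

lemma S_cont: "continuous_on {0..} (\<lambda>s. S s x)"
  by (rule good_cont_on_const[OF S_good])

definition fdef :: "real \<Rightarrow> 'h \<Rightarrow> 'h \<Rightarrow> complex" where
  "fdef \<delta> \<phi> x = (1/\<delta>) *\<^sub>R integral {0..\<delta>} (\<lambda>s. cinner \<phi> (S s x))"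

lemma k_cont: "continuous_on {0..} (\<lambda>s. cinner \<phi> (S s x))"
  by (intro cont_cinner continuous_on_const S_cont)

lemma k_int: "0 \<le> a \<Longrightarrow> (\<lambda>s. cinner \<phi> (S s x)) integrable_on {a..b}"
  by (rule integrable_continuous_interval) (rule continuous_on_subset[OF k_cont], auto)

lemma k_bound: "0 \<le> s \<Longrightarrow> norm (cinner \<phi> (S s x)) \<le> norm \<phi> * M * norm x"
proof -
  assume s: "0 \<le> s"
  have "norm (cinner \<phi> (S s x)) \<le> norm \<phi> * norm (S s x)" by (rule cauchy_schwarz)
  also have "\<dots> \<le> norm \<phi> * (M * norm x)" by (simp add: S_norm1[OF s] mult_left_mono)
  finally show ?thesis by (simp add: mult.assoc)
qed

lemma fdef_riesz:
  assumes d: "\<delta> > 0"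
  shows "\<exists>\<psi>. \<forall>x. fdef \<delta> \<phi> x = cinner \<psi> x"
proof (rule riesz[where K="norm \<phi> * M"])
  fix x y
  have "integral {0..\<delta>} (\<lambda>s. cinner \<phi> (S s (x + y)))
      = integral {0..\<delta>} (\<lambda>s. cinner \<phi> (S s x) + cinner \<phi> (S s y))"
    by (rule integral_cong) (simp add: bclin_add[OF S_bclin] cinner_add_right)
  also have "\<dots> = integral {0..\<delta>} (\<lambda>s. cinner \<phi> (S s x)) + integral {0..\<delta>} (\<lambda>s. cinner \<phi> (S s y))"
    by (rule Henstock_Kurzweil_Integration.integral_add) (simp_all add: k_int)
  finally show "fdef \<delta> \<phi> (x + y) = fdef \<delta> \<phi> x + fdef \<delta> \<phi> y"
    by (simp add: fdef_def scaleR_add_right)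
next
  fix c x
  have "integral {0..\<delta>} (\<lambda>s. cinner \<phi> (S s (c *\<^sub>C x))) = integral {0..\<delta>} ((\<lambda>z. c * z) \<circ> (\<lambda>s. cinner \<phi> (S s x)))"
    by (rule integral_cong) (simp add: bclin_scaleC[OF S_bclin] cinner_scaleC_right)
  also have "\<dots> = c * integral {0..\<delta>} (\<lambda>s. cinner \<phi> (S s x))"
    by (rule integral_linear) (simp_all add: k_int bounded_linear_mult_right)
  finally show "fdef \<delta> \<phi> (c *\<^sub>C x) = c * fdef \<delta> \<phi> x"
    by (simp add: fdef_def scaleR_conv_of_real)
next
  fix x
  have "norm (integral {0..\<delta>} (\<lambda>s. cinner \<phi> (S s x))) \<le> (norm \<phi> * M * norm x) * (\<delta> - 0)"
    by (rule int_bound) (use d k_bound k_int in auto)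
  then show "cmod (fdef \<delta> \<phi> x) \<le> norm x * (norm \<phi> * M)"
    using d by (simp add: fdef_def field_simps)
qed

lemma psi_in_V:
  assumes d: "\<delta> > 0" and psi: "\<And>x. fdef \<delta> \<phi> x = cinner \<psi> x"
  shows "((\<lambda>t. Sa t \<psi>) \<longlongrightarrow> \<psi>) (at_right 0)"
proof -
  define C where "C = 2 * M * norm \<phi> / \<delta>"
  have bnd: "norm (Sa t \<psi> - \<psi>) \<le> C * t" if t: "0 < t" "t < \<delta>" for t
  proof -
    define w where "w = Sa t \<psi> - \<psi>"
    define k where "k = (\<lambda>s. cinner \<phi> (S s w))"
    define B where "B = norm \<phi> * M * norm w"
    have kint: "\<And>a b. 0 \<le> a \<Longrightarrow> k integrable_on {a..b}" unfolding k_def by (rule k_int)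
    have kb: "\<And>s. 0 \<le> s \<Longrightarrow> norm (k s) \<le> B" unfolding k_def B_def by (rule k_bound)
    have "cinner w w = cinner (Sa t \<psi>) w - cinner \<psi> w" by (simp add: w_def cinner_diff_left)
    also have "\<dots> = cinner \<psi> (S t w) - cinner \<psi> w" using t by (simp add: Sa_inner2)
    also have "\<dots> = fdef \<delta> \<phi> (S t w) - fdef \<delta> \<phi> w" by (simp add: psi)
    also have "fdef \<delta> \<phi> (S t w) = (1/\<delta>) *\<^sub>R (integral {t..\<delta>} k + integral {\<delta>..\<delta>+t} k)"
    proof -
      have "integral {0..\<delta>} (\<lambda>s. cinner \<phi> (S s (S t w))) = integral {0..\<delta>} (k \<circ> (+) t)"
        using t by (intro integral_cong) (simp add: k_def S_add add.commute)
      also have "\<dots> = integral {t..\<delta>+t} k" using integral_shift_Icc_real[of 0 \<delta> k t] by simp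
      also have "\<dots> = integral {t..\<delta>} k + integral {\<delta>..\<delta>+t} k"
        using Henstock_Kurzweil_Integration.integral_combine[where a=t and c=\<delta> and b="\<delta>+t" and f=k] t kint[of t "\<delta>+t"] by simp
      finally show ?thesis by (simp add: fdef_def)
    qed
    also have "fdef \<delta> \<phi> w = (1/\<delta>) *\<^sub>R (integral {0..t} k + integral {t..\<delta>} k)"
    proof -
      have "integral {0..\<delta>} (\<lambda>s. cinner \<phi> (S s w)) = integral {0..t} k + integral {t..\<delta>} k"
        using t unfolding k_def[symmetric] by (intro Henstock_Kurzweil_Integration.integral_combine[symmetric] kint) auto
      then show ?thesis by (simp add: fdef_def)
    qed
    finally have "cinner w w = (1/\<delta>) *\<^sub>R (integral {\<delta>..\<delta>+t} k - integral {0..t} k)"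
      by (simp add: algebra_simps)
    then have "(norm w)\<^sup>2 = norm ((1/\<delta>) *\<^sub>R (integral {\<delta>..\<delta>+t} k - integral {0..t} k))"
      by (metis cinner_self norm_of_real abs_power2 real_norm_def)
    also have "\<dots> = (1/\<delta>) * norm (integral {\<delta>..\<delta>+t} k - integral {0..t} k)" using d by simp
    finally have eqn: "(norm w)\<^sup>2 = (1/\<delta>) * norm (integral {\<delta>..\<delta>+t} k - integral {0..t} k)" .
    have le: "norm (integral {\<delta>..\<delta>+t} k - integral {0..t} k) \<le> 2 * B * t"
    proof -
      have "norm (integral {\<delta>..\<delta>+t} k) \<le> B * ((\<delta> + t) - \<delta>)"
        by (rule int_bound) (use t d kint kb in auto)
      moreover have "norm (integral {0..t} k) \<le> B * (t - 0)"
        by (rule int_bound) (use t d kint kb in auto)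
      ultimately show ?thesis using norm_triangle_ineq4[of "integral {\<delta>..\<delta>+t} k" "integral {0..t} k"] by simp
    qed
    have "(1/\<delta>) * norm (integral {\<delta>..\<delta>+t} k - integral {0..t} k) \<le> (1/\<delta>) * (2 * B * t)"
      using le d by (intro mult_left_mono) auto
    then have "(norm w)\<^sup>2 \<le> (1/\<delta>) * (2 * B * t)" using eqn by linarith
    then have "norm w * norm w \<le> (C * t) * norm w" using d by (simp add: power2_eq_square B_def C_def field_simps)
    then have "norm w \<le> C * t"
    proof (cases "norm w = 0")
      case True then show ?thesis using t d Mpos by (simp add: C_def)
    next
      case False
      then have "norm w > 0" by simp
      then show ?thesis using \<open>norm w * norm w \<le> (C * t) * norm w\<close> by (rule mult_right_le_imp_le[rotated])
    qed
    then show ?thesis by (simp add: w_def)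
  qed
  have "((\<lambda>t. Sa t \<psi> - \<psi>) \<longlongrightarrow> 0) (at_right 0)"
  proof (rule Lim_null_comparison)
    show "\<forall>\<^sub>F t in at_right 0. norm (Sa t \<psi> - \<psi>) \<le> C * t"
      unfolding eventually_at_right_field using d bnd by auto
    show "((\<lambda>t. C * t) \<longlongrightarrow> 0) (at_right 0)"
      by (intro tendsto_mult_right_zero tendsto_ident_at)
  qed
  then show ?thesis by (simp add: Lim_null[symmetric])
qed

end

context sg begin

definition Vset :: "'h set" where
  "Vset = {\<phi>. ((\<lambda>h. Sa h \<phi>) \<longlongrightarrow> \<phi>) (at_right 0)}"

lemma ev_pos: "\<forall>\<^sub>F h in at_right (0::real). 0 \<le> h"
  using eventually_at_right_less[of 0] by eventually_elim simp

lemma Vset_sub: "csubspace Vset"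
  unfolding csubspace_def Vset_def
proof (intro conjI ballI allI; clarify?)
  show "((\<lambda>h. Sa h 0) \<longlongrightarrow> 0) (at_right 0)"
  proof (rule Lim_transform_eventually[OF tendsto_const])
    show "\<forall>\<^sub>F h in at_right 0. 0 = Sa h 0"
      using ev_pos by eventually_elim (simp add: bclin_zero[OF Sa_bclin])
  qed
next
  fix x y assume x: "((\<lambda>h. Sa h x) \<longlongrightarrow> x) (at_right 0)" and y: "((\<lambda>h. Sa h y) \<longlongrightarrow> y) (at_right 0)"
  show "((\<lambda>h. Sa h (x + y)) \<longlongrightarrow> x + y) (at_right 0)"
  proof (rule Lim_transform_eventually[OF tendsto_add[OF x y]])
    show "\<forall>\<^sub>F h in at_right 0. Sa h x + Sa h y = Sa h (x + y)"
      using ev_pos by eventually_elim (simp add: bclin_add[OF Sa_bclin])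
  qed
next
  fix c x assume x: "((\<lambda>h. Sa h x) \<longlongrightarrow> x) (at_right 0)"
  show "((\<lambda>h. Sa h (c *\<^sub>C x)) \<longlongrightarrow> c *\<^sub>C x) (at_right 0)"
  proof (rule Lim_transform_eventually[OF tendsto_scaleC[OF x]])
    show "\<forall>\<^sub>F h in at_right 0. c *\<^sub>C Sa h x = Sa h (c *\<^sub>C x)"
      using ev_pos by eventually_elim (simp add: bclin_scaleC[OF Sa_bclin])
  qed
qed

lemma Vset_closed: "closed Vset"
  unfolding closed_sequential_limits
proof (intro allI impI, elim conjE)
  fix x l assume xV: "\<forall>n. x n \<in> Vset" and xl: "x \<longlonglongrightarrow> l"
  show "l \<in> Vset" unfolding Vset_def mem_Collect_eq
  proof (rule tendstoI)
    fix e :: real assume e: "e > 0"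
    define e' where "e' = e / (3 * (M + 1))"
    have e': "e' > 0" using e Mpos by (simp add: e'_def)
    obtain n where n: "norm (x n - l) < e'"
      using xl e' unfolding LIMSEQ_def dist_norm by blast
    have "\<forall>\<^sub>F h in at_right 0. dist (Sa h (x n)) (x n) < e/3"
      using xV e unfolding Vset_def by (intro tendstoD) auto
    then show "\<forall>\<^sub>F h in at_right 0. dist (Sa h l) l < e"
      using ev_pos
    proof eventually_elim
      case (elim h)
      have eqS: "Sa h l - l = Sa h (l - x n) + (Sa h (x n) - x n) + (x n - l)"
        using elim by (simp add: bclin_diff[OF Sa_bclin])
      have t1: "norm (Sa h (l - x n) + (Sa h (x n) - x n) + (x n - l)) \<le> norm (Sa h (l - x n) + (Sa h (x n) - x n)) + norm (x n - l)"
        by (rule norm_triangle_ineq)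
      have t2: "norm (Sa h (l - x n) + (Sa h (x n) - x n)) \<le> norm (Sa h (l - x n)) + norm (Sa h (x n) - x n)"
        by (rule norm_triangle_ineq)
      have "norm (Sa h l - l) \<le> norm (Sa h (l - x n)) + norm (Sa h (x n) - x n) + norm (x n - l)"
        unfolding eqS using t1 t2 by linarith
      also have "norm (Sa h (l - x n)) \<le> M * e'"
      proof -
        have "norm (Sa h (l - x n)) \<le> M * norm (l - x n)" using Sa_norm1[OF elim(2)] .
        also have "\<dots> \<le> M * e'" using n Mpos by (intro mult_left_mono) (auto simp: norm_minus_commute)
        finally show ?thesis .
      qed
      finally have A: "norm (Sa h l - l) \<le> M * e' + norm (Sa h (x n) - x n) + e'" using n by simp
      have "M * e' + e' = (M + 1) * e'" by (simp add: algebra_simps)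
      also have "\<dots> = e / 3"
      proof -
        have h3: "3 * (M + 1) \<noteq> 0" using Mpos by simp
        have "e' * (3 * (M + 1)) = e" unfolding e'_def using h3 by simp
        then show ?thesis by (simp add: field_simps)
      qed
      finally have B: "M * e' + e' = e / 3" .
      have C: "norm (Sa h (x n) - x n) < e/3" using elim(1) by (simp add: dist_norm)
      show ?case unfolding dist_norm using A B C e by linarith
    qed
  qed
qed

lemma Vset_dense: "cinner \<phi> u = 0" if u: "\<And>v. v \<in> Vset \<Longrightarrow> cinner v u = 0"
proof -
  have zero: "fdef \<delta> \<phi> u = 0" if d: "\<delta> > 0" for \<delta>
  proof -
    obtain \<psi> where psi: "\<And>x. fdef \<delta> \<phi> x = cinner \<psi> x" using fdef_riesz[OF d] by blast
    have "\<psi> \<in> Vset" using psi_in_V[OF d psi] by (simp add: Vset_def)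
    then show ?thesis using u psi by simp
  qed
  have lim: "((\<lambda>d. (1/d) *\<^sub>R integral {0..0+d} (\<lambda>s. cinner \<phi> (S s u))) \<longlongrightarrow> cinner \<phi> (S 0 u)) (at_right 0)"
    by (rule avg_right[where b=1]) (auto intro: continuous_on_subset[OF k_cont])
  have "((\<lambda>d. fdef d \<phi> u) \<longlongrightarrow> cinner \<phi> u) (at_right 0)"
    using lim by (simp add: fdef_def S_0)
  moreover have "((\<lambda>d. fdef d \<phi> u) \<longlongrightarrow> 0) (at_right 0)"
  proof (rule Lim_transform_eventually[OF tendsto_const])
    show "\<forall>\<^sub>F d in at_right 0. 0 = fdef d \<phi> u"
      using eventually_at_right_less[of 0] by eventually_elim (simp add: zero)
  qed
  ultimately show ?thesis using tendsto_unique trivial_limit_at_right_real by blast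
qed

lemma Sa_right: "((\<lambda>h. Sa h \<phi>) \<longlongrightarrow> \<phi>) (at_right 0)"
proof -
  obtain p where p: "p \<in> Vset" and orth: "\<And>v. v \<in> Vset \<Longrightarrow> cinner v (\<phi> - p) = 0"
    using projection_exists[OF Vset_sub Vset_closed] by blast
  have "cinner (\<phi> - p) (\<phi> - p) = 0" by (rule Vset_dense) (rule orth)
  then have "\<phi> = p" by (simp add: cinner_eq_zero_iff)
  then show ?thesis using p by (simp add: Vset_def)
qed

lemma Sa_good: "good Sa M"
  unfolding good_def using Mpos Sa_bclin Sa_norm1 Sa_add Sa_right by auto

end


lemma bl_cinner: "bounded_linear (cinner (y::'a::complex_inner))"
  by (rule bounded_bilinear.bounded_linear_right[OF bounded_bilinear_cinner])

lemma lebesgue_ind_has_integral: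
  fixes g :: "real \<Rightarrow> complex"
  assumes "has_bochner_integral lebesgue (\<lambda>x. indicator A x *\<^sub>R g x) i"
  shows "(g has_integral i) A"
proof -
  have int: "integrable lebesgue (\<lambda>x. indicator A x *\<^sub>R g x)" using assms by (auto simp: integrable.simps)
  have "((\<lambda>x. indicator A x *\<^sub>R g x) has_integral (integral\<^sup>L lebesgue (\<lambda>x. indicator A x *\<^sub>R g x))) UNIV"
    by (rule has_integral_integral_lebesgue[OF int])
  moreover have "integral\<^sup>L lebesgue (\<lambda>x. indicator A x *\<^sub>R g x) = i"
    using assms by (rule has_bochner_integral_integral_eq)
  ultimately have "((\<lambda>x. if x \<in> A then g x else 0) has_integral i) UNIV"
    by (simp add: indicator_scaleR_eq_if)
  then show ?thesis by (simp add: has_integral_restrict_UNIV)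
qed

lemma norm_le_from_inner:
  fixes D :: "'a::complex_inner"
  assumes "0 \<le> e" and "\<And>x. cmod (cinner x D) \<le> norm x * e"
  shows "norm D \<le> e"
proof (cases "D = 0")
  case True then show ?thesis using assms by simp
next
  case False
  have "(norm D)\<^sup>2 = cmod (cinner D D)" by (simp add: cinner_self norm_power)
  also have "\<dots> \<le> norm D * e" by (rule assms(2))
  finally have "norm D * norm D \<le> e * norm D" by (simp add: power2_eq_square mult.commute)
  moreover have "norm D > 0" using False by simp
  ultimately show ?thesis by (rule mult_right_le_imp_le)
qed

locale sg2 = sg S M \<alpha> for S :: "real \<Rightarrow> 'h::{chilbert_space, second_countable_topology} \<Rightarrow> 'h" and M \<alpha>
begin

lemma F_cont:
  assumes W: "bounded_clinear W"
  shows "continuous_on {0..} (\<lambda>t. S t (W (Sa t \<phi>)))"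
proof -
  have "continuous_on {0..} (\<lambda>t. W (Sa t \<phi>))"
    by (rule continuous_on_compose2[OF bclin_continuous[OF W] good_cont_on_const[OF Sa_good]]) auto
  then show ?thesis by (rule good_cont_on[OF S_good])
qed

lemma key_identity:
  assumes W: "bounded_clinear W"
    and V: "\<And>\<psi>. has_bochner_integral (lebesgue_on {0..}) (\<lambda>t. S t (W (Sa t \<psi>))) (V \<psi>)"
    and h: "h > 0"
  shows "((\<lambda>t. cinner y (S t (W (Sa t \<phi>)))) has_integral (cinner y (V \<phi>) - cinner y (S h (V (Sa h \<phi>))))) {0..h}"
proof -
  define g where "g = (\<lambda>t. cinner y (S t (W (Sa t \<phi>))))"
  define I1 where "I1 = cinner y (V \<phi>)"
  define I2 where "I2 = cinner y (S h (V (Sa h \<phi>)))"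
  have "{0::real..} \<in> sets lebesgue" by (metis atLeast_borel sets_completionI_sets sets_lborel)
  then have sets0: "{0::real..} \<inter> space lebesgue \<in> sets lebesgue" by simp
  have "has_bochner_integral (lebesgue_on {0..}) g I1"
    unfolding g_def I1_def by (rule has_bochner_integral_bounded_linear[OF bl_cinner V])
  then have b1: "has_bochner_integral lebesgue (\<lambda>x. indicator {0..} x *\<^sub>R g x) I1"
    using has_bochner_integral_restrict_space[OF sets0] by blast
  have bl2: "bounded_linear (\<lambda>z. cinner y (S h z))"
    using bounded_linear_compose[OF bl_cinner bclin_bounded_linear[OF S_bclin]] h by simp
  have "has_bochner_integral (lebesgue_on {0..}) (\<lambda>t. cinner y (S h (S t (W (Sa t (Sa h \<phi>)))))) I2"
    unfolding I2_def by (rule has_bochner_integral_bounded_linear[OF bl2 V])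
  moreover have "\<And>t. t \<in> space (lebesgue_on {0..}) \<Longrightarrow>
      cinner y (S h (S t (W (Sa t (Sa h \<phi>))))) = g (h + 1 * t)"
  proof -
    fix t :: real assume "t \<in> space (lebesgue_on {0..})"
    then have t: "0 \<le> t" by simp
    have e1: "S h (S t z) = S (h + t) z" for z using S_add[of h t z] h t by simp
    have e2: "Sa t (Sa h \<phi>) = Sa (h + t) \<phi>" using Sa_add[of t h \<phi>] h t by (simp add: add.commute)
    show "cinner y (S h (S t (W (Sa t (Sa h \<phi>))))) = g (h + 1 * t)"
      by (simp add: g_def e1 e2)
  qed
  ultimately have "has_bochner_integral (lebesgue_on {0..}) (\<lambda>t. g (h + 1 * t)) I2"
    using has_bochner_integral_cong by (metis (no_types, lifting))
  then have "has_bochner_integral lebesgue (\<lambda>x. indicator {0..} x *\<^sub>R g (h + 1 * x)) I2"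
    using has_bochner_integral_restrict_space[OF sets0, where f="\<lambda>t. g (h + 1 * t)" and i=I2] by blast
  moreover have ind: "\<And>x. indicator {h..} (h + x) = (indicator {0..} x :: real)"
    by (simp add: indicator_def)
  ultimately have b2: "has_bochner_integral lebesgue (\<lambda>x. indicator {h..} x *\<^sub>R g x) I2"
    using has_bochner_integral_lebesgue_real_affine_iff[of 1 "\<lambda>x. indicator {h..} x *\<^sub>R g x" I2 h]
    by (simp add: ind)
  have "has_bochner_integral lebesgue (\<lambda>x. indicator {0..} x *\<^sub>R g x - indicator {h..} x *\<^sub>R g x) (I1 - I2)"
    by (rule has_bochner_integral_diff[OF b1 b2])
  moreover have "\<And>x. indicator {0..} x *\<^sub>R g x - indicator {h..} x *\<^sub>R g x = indicator {0..<h} x *\<^sub>R g x"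
    using h by (auto simp: indicator_def)
  ultimately have "has_bochner_integral lebesgue (\<lambda>x. indicator {0..<h} x *\<^sub>R g x) (I1 - I2)" by simp
  then have "(g has_integral (I1 - I2)) {0..<h}" by (rule lebesgue_ind_has_integral)
  moreover have "(g has_integral (I1 - I2)) {0..<h} \<longleftrightarrow> (g has_integral (I1 - I2)) {0..h}"
    by (rule has_integral_spike_set_eq) (auto intro: negligible_subset[OF negligible_sing[of h]])
  ultimately show ?thesis by (simp add: g_def I1_def I2_def)
qed

lemma deriv_lemma:
  assumes W: "bounded_clinear W"
    and V: "\<And>\<psi>. has_bochner_integral (lebesgue_on {0..}) (\<lambda>t. S t (W (Sa t \<psi>))) (V \<psi>)"
  shows "((\<lambda>h. (1/h) *\<^sub>R (S h (V (Sa h \<phi>)) - V \<phi>)) \<longlongrightarrow> - W \<phi>) (at_right 0)"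
proof -
  define F where "F = (\<lambda>t. S t (W (Sa t \<phi>)))"
  have F0: "F 0 = W \<phi>" by (simp add: F_def S_0 Sa_0)
  have Fc: "(F \<longlongrightarrow> F 0) (at 0 within {0..})"
    using F_cont[OF W] unfolding continuous_on_def F_def by auto
  define D where "D = (\<lambda>h. (1/h) *\<^sub>R (S h (V (Sa h \<phi>)) - V \<phi>) + W \<phi>)"
  have "(D \<longlongrightarrow> 0) (at_right 0)"
  proof (rule tendstoI)
    fix e :: real assume e: "e > 0"
    obtain d where d: "d > 0" and dF: "\<And>s. s \<in> {0..} \<Longrightarrow> s \<noteq> 0 \<and> dist s 0 < d \<Longrightarrow> dist (F s) (F 0) < e/2"
      using Fc e unfolding tendsto_iff eventually_at by (metis half_gt_zero)
    have dF': "norm (F s - F 0) \<le> e/2" if "s \<in> {0..d/2}" for s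
      using that dF[of s] d e by (cases "s = 0") (auto simp: dist_norm)
    show "\<forall>\<^sub>F h in at_right 0. dist (D h) 0 < e"
      unfolding eventually_at_right_field
    proof (intro exI[of _ "d/2"] conjI allI impI)
      show "0 < d/2" using d by simp
      fix h :: real assume h: "0 < h" "h < d/2"
      have "norm (D h) \<le> e/2"
      proof (rule norm_le_from_inner)
        show "0 \<le> e/2" using e by simp
        fix y
        define g where "g = (\<lambda>t. cinner y (F t))"
        have hi: "(g has_integral (cinner y (V \<phi>) - cinner y (S h (V (Sa h \<phi>))))) {0..h}"
          unfolding g_def F_def by (rule key_identity[OF W V h(1)])
        have hc: "((\<lambda>t. g 0) has_integral (h *\<^sub>R g 0)) {0..h}"
          using has_integral_const_real[of "g 0" 0 h] h by simp
        have hd: "((\<lambda>t. g t - g 0) has_integral ((cinner y (V \<phi>) - cinner y (S h (V (Sa h \<phi>)))) - h *\<^sub>R g 0)) {0..h}"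
          by (rule has_integral_diff[OF hi hc])
        have nb: "norm ((cinner y (V \<phi>) - cinner y (S h (V (Sa h \<phi>)))) - h *\<^sub>R g 0)
             \<le> (norm y * (e/2)) * Henstock_Kurzweil_Integration.content (cbox 0 h)"
        proof (rule has_integral_bound)
          show "0 \<le> norm y * (e/2)" using e by simp
          show "((\<lambda>t. g t - g 0) has_integral ((cinner y (V \<phi>) - cinner y (S h (V (Sa h \<phi>)))) - h *\<^sub>R g 0)) (cbox 0 h)"
            using hd by (simp add: cbox_interval)
          fix s assume s: "s \<in> cbox 0 h"
          have "norm (g s - g 0) = cmod (cinner y (F s - F 0))" by (simp add: g_def cinner_diff_right)
          also have "\<dots> \<le> norm y * norm (F s - F 0)" by (rule cauchy_schwarz)
          also have "\<dots> \<le> norm y * (e/2)"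
            using dF'[of s] s h by (intro mult_left_mono) (auto simp: cbox_interval)
          finally show "norm (g s - g 0) \<le> norm y * (e/2)" .
        qed
        have "cinner y (D h) = - (1/h) *\<^sub>R ((cinner y (V \<phi>) - cinner y (S h (V (Sa h \<phi>)))) - h *\<^sub>R g 0)"
          using h by (simp add: D_def g_def F0 cinner_add_right cinner_scaleR_right cinner_diff_right
              scaleR_conv_of_real field_simps)
        then have "cmod (cinner y (D h)) = (1/h) * norm ((cinner y (V \<phi>) - cinner y (S h (V (Sa h \<phi>)))) - h *\<^sub>R g 0)"
          using h by simp
        also have "\<dots> \<le> (1/h) * ((norm y * (e/2)) * h)"
          using nb h by (intro mult_left_mono) auto
        finally show "cmod (cinner y (D h)) \<le> norm y * (e/2)" using h by simp
      qed
      then show "dist (D h) 0 < e" using e by simp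
    qed
  qed
  then have "((\<lambda>h. D h - W \<phi>) \<longlongrightarrow> 0 - W \<phi>) (at_right 0)" by (intro tendsto_diff tendsto_const)
  then show ?thesis by (simp add: D_def)
qed

end


context sg begin

lemma dom_lemma:
  assumes X: "bounded_clinear X"
    and lim: "((\<lambda>h. (1/h) *\<^sub>R (S h (X (Sa h \<phi>)) - X \<phi>)) \<longlongrightarrow> z) (at_right 0)"
    and adj: "((\<lambda>h. (1/h) *\<^sub>R (Sa h \<phi> - \<phi>)) \<longlongrightarrow> a) (at_right 0)"
  shows "((\<lambda>h. (1/h) *\<^sub>R (S h (X \<phi>) - X \<phi>)) \<longlongrightarrow> z - X a) (at_right 0)"
proof -
  define d where "d = (\<lambda>h. (1/h) *\<^sub>R (Sa h \<phi> - \<phi>))"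
  have "((\<lambda>h. X (d h)) \<longlongrightarrow> X a) (at 0 within {0..})"
    using bclin_tendsto[OF X adj] by (simp add: d_def at_within_Ici_at_right)
  then have t1: "((\<lambda>h. S h (X (d h))) \<longlongrightarrow> S 0 (X a)) (at 0 within {0..})"
    by (rule good_tendsto[OF S_good order_refl])
  then have t1': "((\<lambda>h. S h (X (d h))) \<longlongrightarrow> X a) (at_right 0)" by (simp add: S_0 at_within_Ici_at_right)
  have "((\<lambda>h. (1/h) *\<^sub>R (S h (X (Sa h \<phi>)) - X \<phi>) - S h (X (d h))) \<longlongrightarrow> z - X a) (at_right 0)"
    by (intro tendsto_diff lim t1')
  moreover have "\<forall>\<^sub>F h in at_right 0. (1/h) *\<^sub>R (S h (X (Sa h \<phi>)) - X \<phi>) - S h (X (d h)) = (1/h) *\<^sub>R (S h (X \<phi>) - X \<phi>)"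
    using eventually_at_right_less[of 0]
  proof eventually_elim
    case (elim h)
    have "Sa h \<phi> = \<phi> + h *\<^sub>R d h" using elim by (simp add: d_def)
    then have "S h (X (Sa h \<phi>)) = S h (X \<phi>) + h *\<^sub>R S h (X (d h))"
      using elim by (simp add: bclin_add[OF X] bclin_scaleR[OF X] bclin_add[OF S_bclin] bclin_scaleR[OF S_bclin])
    then show ?case using elim by (simp add: algebra_simps)
  qed
  ultimately show ?thesis by (rule Lim_transform_eventually)
qed

end

context sg2 begin

lemma sets0: "{0::real..} \<in> sets lebesgue" by (metis atLeast_borel sets_completionI_sets sets_lborel)

lemma exp_at_top: "((\<lambda>t. exp (- \<alpha> * t)) \<longlongrightarrow> 0) at_top"
proof -
  have "filterlim (\<lambda>t. \<alpha> * t) at_top at_top"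
    by (rule filterlim_tendsto_pos_mult_at_top[OF tendsto_const apos filterlim_ident])
  then have "filterlim (\<lambda>t. - (\<alpha> * t)) at_bot at_top"
    by (simp add: filterlim_uminus_at_bot)
  then show ?thesis using filterlim_compose[OF exp_at_bot] by simp
qed

lemma exp_integrable:
  assumes C: "0 \<le> C"
  shows "integrable (lebesgue_on {0..}) (\<lambda>t. C * exp (- (2 * \<alpha>) * t))"
proof -
  have "((\<lambda>t. exp (- (2 * \<alpha>) * t)) has_integral exp (- (2 * \<alpha>) * 0) / (2 * \<alpha>)) {0..}"
    using has_integral_exp_minus_to_infinity[of "2 * \<alpha>" 0] apos by simp
  then have "((\<lambda>t. C *\<^sub>R exp (- (2 * \<alpha>) * t)) has_integral C *\<^sub>R (exp (- (2 * \<alpha>) * 0) / (2 * \<alpha>))) {0..}"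
    by (rule has_integral_cmul)
  then have "(\<lambda>t. C * exp (- (2 * \<alpha>) * t)) integrable_on {0..}" by (auto simp: integrable_on_def)
  then have "(\<lambda>t. C * exp (- (2 * \<alpha>) * t)) absolutely_integrable_on {0..}"
    by (rule nonnegative_absolutely_integrable_1) (use C in simp)
  then show ?thesis by (rule absolutely_integrable_imp_integrable[OF _ sets0])
qed

lemma F_bound:
  assumes W: "bounded_clinear W" and t: "0 \<le> t"
  shows "norm (S t (W (Sa t \<phi>))) \<le> (M * M * onorm W * norm \<phi>) * exp (- (2 * \<alpha>) * t)"
proof -
  have a: "norm (S t (W (Sa t \<phi>))) \<le> M * exp (- \<alpha> * t) * norm (W (Sa t \<phi>))" by (rule S_norm[OF t])
  have b: "norm (W (Sa t \<phi>)) \<le> onorm W * norm (Sa t \<phi>)" by (rule bclin_norm[OF W])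
  have c: "norm (Sa t \<phi>) \<le> M * exp (- \<alpha> * t) * norm \<phi>" by (rule Sa_norm[OF t])
  have Me: "0 \<le> M * exp (- \<alpha> * t)" using Mpos by simp
  have oW: "0 \<le> onorm W" by (rule bclin_onorm_nonneg[OF W])
  have "norm (S t (W (Sa t \<phi>))) \<le> M * exp (- \<alpha> * t) * (onorm W * (M * exp (- \<alpha> * t) * norm \<phi>))"
    using a mult_left_mono[OF order_trans[OF b mult_left_mono[OF c oW]] Me] by linarith
  also have "\<dots> = (M * M * onorm W * norm \<phi>) * (exp (- \<alpha> * t) * exp (- \<alpha> * t))" by (simp add: algebra_simps)
  also have "exp (- \<alpha> * t) * exp (- \<alpha> * t) = exp (- (2 * \<alpha>) * t)"
    by (subst exp_add[symmetric]) (simp add: algebra_simps)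
  finally show ?thesis .
qed

lemma F_integrable:
  assumes W: "bounded_clinear W"
  shows "integrable (lebesgue_on {0..}) (\<lambda>t. S t (W (Sa t \<phi>)))"
proof (rule Bochner_Integration.integrable_bound[OF exp_integrable])
  show "0 \<le> M * M * onorm W * norm \<phi>" using Mpos bclin_onorm_nonneg[OF W] by simp
  show "(\<lambda>t. S t (W (Sa t \<phi>))) \<in> borel_measurable (lebesgue_on {0..})"
    by (rule continuous_imp_measurable_on_sets_lebesgue[OF F_cont[OF W] sets0])
  show "AE t in lebesgue_on {0..}. norm (S t (W (Sa t \<phi>))) \<le> norm (M * M * onorm W * norm \<phi> * exp (- (2 * \<alpha>) * t))"
  proof (rule AE_I2)
    fix t assume "t \<in> space (lebesgue_on {0::real..})"
    then have t: "0 \<le> t" by simp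
    have "norm (S t (W (Sa t \<phi>))) \<le> (M * M * onorm W * norm \<phi>) * exp (- (2 * \<alpha>) * t)"
      by (rule F_bound[OF W t])
    also have "\<dots> \<le> norm (M * M * onorm W * norm \<phi> * exp (- (2 * \<alpha>) * t))" by simp
    finally show "norm (S t (W (Sa t \<phi>))) \<le> norm (M * M * onorm W * norm \<phi> * exp (- (2 * \<alpha>) * t))" .
  qed
qed

lemma strong_to_integral:
  assumes W: "bounded_clinear W" and Y: "bounded_clinear Y"
    and lim: "\<And>\<phi>. ((\<lambda>h. (1/h) *\<^sub>R (S h (Y (Sa h \<phi>)) - Y \<phi>)) \<longlongrightarrow> - W \<phi>) (at_right 0)"
  shows "has_bochner_integral (lebesgue_on {0..}) (\<lambda>t. S t (W (Sa t \<phi>))) (Y \<phi>)"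
proof -
  define F where "F = (\<lambda>t. S t (W (Sa t \<phi>)))"
  have Fc: "continuous_on {0..} F" unfolding F_def by (rule F_cont[OF W])
  have Fint: "integrable (lebesgue_on {0..}) F" unfolding F_def by (rule F_integrable[OF W])
  define I where "I = integral\<^sup>L (lebesgue_on {0..}) F"
  have hbI: "has_bochner_integral (lebesgue_on {0..}) F I"
    unfolding I_def by (rule has_bochner_integral_integrable[OF Fint])
  have "I = Y \<phi>"
  proof (rule cinner_eqI)
    fix y
    define g where "g = (\<lambda>t. cinner y (F t))"
    have gb: "has_bochner_integral (lebesgue_on {0..}) g (cinner y I)"
      unfolding g_def by (rule has_bochner_integral_bounded_linear[OF bl_cinner hbI])
    have gint: "integrable (lebesgue_on {0..}) g" using gb by (auto simp: integrable.simps)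
    have ghk: "(g has_integral cinner y I) {0..}"
      using has_integral_integral_lebesgue_on[OF gint sets0] has_bochner_integral_integral_eq[OF gb] by simp
    have gc: "continuous_on {0..} g" unfolding g_def by (intro cont_cinner continuous_on_const Fc)
    have gint_ivl: "g integrable_on {a..b}" if "0 \<le> a" for a b
      by (rule integrable_continuous_interval) (rule continuous_on_subset[OF gc], use that in auto)
    define p where "p = (\<lambda>T. cinner y (S T (Y (Sa T \<phi>))) + integral {0..T} g)"
    have pc: "continuous_on {0..T} p" for T
    proof -
      have "continuous_on {0..} (\<lambda>T. cinner y (S T (Y (Sa T \<phi>))))"
        by (intro cont_cinner continuous_on_const F_cont[OF Y])
      then have "continuous_on {0..T} (\<lambda>T. cinner y (S T (Y (Sa T \<phi>))))"
        by (rule continuous_on_subset) auto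
      moreover have "continuous_on {0..T} (\<lambda>T. integral {0..T} g)"
        by (rule indefinite_integral_continuous_1[OF gint_ivl]) simp
      ultimately show ?thesis unfolding p_def by (intro continuous_on_add)
    qed
    have pd: "((\<lambda>h. (1/h) *\<^sub>R (p (t+h) - p t)) \<longlongrightarrow> 0) (at_right 0)" if t: "0 \<le> t" for t
    proof -
      define \<psi> where "\<psi> = Sa t \<phi>"
      have A: "((\<lambda>h. cinner y (S t ((1/h) *\<^sub>R (S h (Y (Sa h \<psi>)) - Y \<psi>)))) \<longlongrightarrow> cinner y (S t (- W \<psi>))) (at_right 0)"
        by (intro tendsto_cinner tendsto_const bclin_tendsto[OF S_bclin[OF t]] lim)
      have "continuous_on {t..t+1} g" by (rule continuous_on_subset[OF gc]) (use t in auto)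
      then have B: "((\<lambda>h. (1/h) *\<^sub>R integral {t..t+h} g) \<longlongrightarrow> g t) (at_right 0)"
        by (rule avg_right) simp
      have sum0: "cinner y (S t (- W \<psi>)) + g t = 0"
        by (simp add: g_def F_def \<psi>_def bclin_minus[OF S_bclin[OF t]] cinner_minus_right)
      have "((\<lambda>h. cinner y (S t ((1/h) *\<^sub>R (S h (Y (Sa h \<psi>)) - Y \<psi>))) + (1/h) *\<^sub>R integral {t..t+h} g)
          \<longlongrightarrow> 0) (at_right 0)"
        using tendsto_add[OF A B] by (simp add: sum0)
      moreover have "\<forall>\<^sub>F h in at_right 0. cinner y (S t ((1/h) *\<^sub>R (S h (Y (Sa h \<psi>)) - Y \<psi>))) + (1/h) *\<^sub>R integral {t..t+h} g
          = (1/h) *\<^sub>R (p (t+h) - p t)"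
        using eventually_at_right_less[of 0]
      proof eventually_elim
        case (elim h)
        have e1: "S (t + h) z = S t (S h z)" for z using S_add[of t h z] t elim by simp
        have e2: "Sa (t + h) \<phi> = Sa h \<psi>" using Sa_add[of h t \<phi>] t elim by (simp add: \<psi>_def add.commute)
        have e3: "integral {0..t+h} g = integral {0..t} g + integral {t..t+h} g"
          using Henstock_Kurzweil_Integration.integral_combine[where a=0 and c=t and b="t+h" and f=g]
            t elim gint_ivl[of 0 "t+h"] by simp
        define v where "v = S h (Y (Sa h \<psi>)) - Y \<psi>"
        have pe: "p (t+h) - p t = cinner y (S t v) + integral {t..t+h} g"
          by (simp add: p_def e1 e2 e3 \<psi>_def v_def bclin_diff[OF S_bclin[OF t]] cinner_diff_right)
        have fact: "cinner y (S t ((1/h) *\<^sub>R v)) = (1/h) *\<^sub>R cinner y (S t v)"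
          by (simp add: bclin_scaleR[OF S_bclin[OF t]] cinner_scaleR_right scaleR_conv_of_real)
        show ?case unfolding v_def[symmetric] pe scaleR_add_right fact by (rule refl)
      qed
      ultimately show ?thesis by (rule Lim_transform_eventually)
    qed
    have pconst: "p T = p 0" if "0 \<le> T" for T
      by (rule right_deriv_zero_const[OF pc pd that]) simp
    have p0: "p 0 = cinner y (Y \<phi>)" by (simp add: p_def S_0 Sa_0)
    have lim1: "((\<lambda>T. cinner y (S T (Y (Sa T \<phi>)))) \<longlongrightarrow> 0) at_top"
    proof (rule Lim_null_comparison)
      show "\<forall>\<^sub>F T in at_top. norm (cinner y (S T (Y (Sa T \<phi>)))) \<le> norm y * ((M * M * onorm Y * norm \<phi>) * exp (- (2 * \<alpha>) * T))"
        using eventually_ge_at_top[of "0::real"]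
      proof eventually_elim
        case (elim T)
        have "norm (cinner y (S T (Y (Sa T \<phi>)))) \<le> norm y * norm (S T (Y (Sa T \<phi>)))" by (rule cauchy_schwarz)
        also have "\<dots> \<le> norm y * ((M * M * onorm Y * norm \<phi>) * exp (- (2 * \<alpha>) * T))"
          by (rule mult_left_mono[OF F_bound[OF Y elim]]) simp
        finally show ?case .
      qed
      have "((\<lambda>T. exp (- \<alpha> * T) * exp (- \<alpha> * T)) \<longlongrightarrow> 0 * 0) at_top"
        by (intro tendsto_mult exp_at_top)
      moreover have "\<And>T. exp (- \<alpha> * T) * exp (- \<alpha> * T) = exp (- (2 * \<alpha>) * T)"
        by (subst exp_add[symmetric]) (simp add: algebra_simps)
      ultimately have "((\<lambda>T. exp (- (2 * \<alpha>) * T)) \<longlongrightarrow> 0) at_top" by simp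
      then show "((\<lambda>T. norm y * ((M * M * onorm Y * norm \<phi>) * exp (- (2 * \<alpha>) * T))) \<longlongrightarrow> 0) at_top"
        by (intro tendsto_mult_right_zero)
    qed
    have lim2: "((\<lambda>T. integral {0..T} g) \<longlongrightarrow> cinner y I) at_top"
    proof -
      have si: "set_integrable lebesgue {0..} g"
        unfolding set_integrable_def using gint integrable_restrict_space[of "{0::real..}" lebesgue g] sets0 by simp
      have "((\<lambda>b. set_lebesgue_integral lebesgue {0..b} g) \<longlongrightarrow> set_lebesgue_integral lebesgue {0..} g) at_top"
        by (rule tendsto_set_lebesgue_integral_at_top[OF _ si]) auto
      moreover have "set_lebesgue_integral lebesgue {0..} g = cinner y I"
        using set_lebesgue_integral_eq_integral(2)[OF si] integral_unique[OF ghk] by simp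
      moreover have "\<forall>\<^sub>F b in at_top. set_lebesgue_integral lebesgue {0..b} g = integral {0..b} g"
        using eventually_ge_at_top[of "0::real"]
      proof eventually_elim
        case (elim b)
        have "set_integrable lebesgue {0..b} g" by (rule set_integrable_subset[OF si]) auto
        then show ?case by (rule set_lebesgue_integral_eq_integral(2))
      qed
      ultimately show ?thesis using Lim_transform_eventually by fastforce
    qed
    have "(p \<longlongrightarrow> 0 + cinner y I) at_top" unfolding p_def by (intro tendsto_add lim1 lim2)
    moreover have "(p \<longlongrightarrow> cinner y (Y \<phi>)) at_top"
    proof (rule Lim_transform_eventually[OF tendsto_const])
      show "\<forall>\<^sub>F T in at_top. cinner y (Y \<phi>) = p T"
        using eventually_ge_at_top[of "0::real"] by eventually_elim (simp add: pconst p0)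
    qed
    ultimately show "cinner y I = cinner y (Y \<phi>)" using tendsto_unique trivial_limit_at_top_linorder by force
  qed
  then show ?thesis using hbI by (simp add: F_def)
qed

end


definition Bf :: "('a::complex_inner \<Rightarrow> 'a) \<Rightarrow> 'a \<Rightarrow> 'a \<Rightarrow> complex" where
  "Bf R x y = cinner x (R y)"

lemma psd_bclin: "pos_semidef R \<Longrightarrow> bounded_clinear R"
  by (simp add: pos_semidef_def symmetric_op_def)

lemma psd_sym: "pos_semidef R \<Longrightarrow> cinner (R x) y = cinner x (R y)"
  by (simp add: pos_semidef_def symmetric_op_def)

lemma psd_real: "pos_semidef R \<Longrightarrow> cinner x (R x) = of_real (Re (cinner x (R x)))"
  unfolding pos_semidef_def by (metis Reals_cases Re_complex_of_real)

lemma psd_nonneg: "pos_semidef R \<Longrightarrow> 0 \<le> Re (cinner x (R x))"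
  unfolding pos_semidef_def by blast

lemma psd_herm: "pos_semidef R \<Longrightarrow> cnj (cinner x (R y)) = cinner y (R x)"
  by (metis cinner_commute psd_sym)

lemma psd_id: "pos_semidef (id :: 'a::complex_inner \<Rightarrow> 'a)"
  unfolding pos_semidef_def symmetric_op_def
  using bclin_id' by (auto simp: cinner_self cinner_self_Re)

lemma psd_ineq:
  assumes R: "pos_semidef R"
  shows "cmod (cinner f (R e)) \<le> (Re (cinner e (R e)) + Re (cinner f (R f))) / 2"
proof (cases "cinner f (R e) = 0")
  case True then show ?thesis using psd_nonneg[OF R, of e] psd_nonneg[OF R, of f] by simp
next
  case False
  define c where "c = cinner f (R e)"
  define u where "u = cnj c / of_real (cmod c)"
  have c0: "cmod c > 0" using False by (simp add: c_def)
  have Rl: "bounded_clinear R" using R by (rule psd_bclin)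
  define v where "v = f - u *\<^sub>C e"
  have "cinner v (R v) = cinner f (R f) - u * cinner f (R e) - cnj u * cinner e (R f) + cnj u * u * cinner e (R e)"
    by (simp add: v_def bclin_diff[OF Rl] bclin_scaleC[OF Rl] cinner_diff_left cinner_diff_right
        cinner_scaleC_left cinner_scaleC_right algebra_simps)
  also have "cinner e (R f) = cnj c" using psd_herm[OF R, of f e] by (simp add: c_def)
  also have "u * cinner f (R e) = of_real (cmod c)"
  proof -
    have "cnj c * c = of_real ((cmod c)\<^sup>2)" by (metis complex_norm_square mult.commute of_real_power)
    then show ?thesis using c0 by (simp add: u_def c_def[symmetric] power2_eq_square field_simps)
  qed
  also have "cnj u * cnj c = of_real (cmod c)"
  proof -
    have "c * cnj c = of_real ((cmod c)\<^sup>2)" by (metis complex_norm_square of_real_power)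
    then show ?thesis using c0 by (simp add: u_def power2_eq_square field_simps)
  qed
  also have "cnj u * u = 1"
  proof -
    have "c * cnj c = of_real ((cmod c)\<^sup>2)" by (metis complex_norm_square of_real_power)
    then show ?thesis using c0 by (simp add: u_def power2_eq_square field_simps)
  qed
  finally have "cinner v (R v) = cinner f (R f) - of_real (cmod c) - of_real (cmod c) + cinner e (R e)" by simp
  then have "Re (cinner v (R v)) = Re (cinner f (R f)) - 2 * cmod c + Re (cinner e (R e))" by simp
  moreover have "0 \<le> Re (cinner v (R v))" by (rule psd_nonneg[OF R])
  ultimately show ?thesis by (simp add: c_def)
qed

lemma null_orth:
  assumes R: "pos_semidef R" and a: "cinner a (R a) = 0"
  shows "cinner w (R a) = 0"
proof (rule ccontr)
  assume ne: "cinner w (R a) \<noteq> 0"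
  define d where "d = cmod (cinner w (R a))"
  define q where "q = Re (cinner w (R w))"
  have d: "d > 0" using ne by (simp add: d_def)
  have q: "q \<ge> 0" using psd_nonneg[OF R] by (simp add: q_def)
  have Rl: "bounded_clinear R" using R by (rule psd_bclin)
  define s where "s = d / (q + 1)"
  have s: "s > 0" using d q by (simp add: s_def)
  have "cmod (cinner (s *\<^sub>R w) (R a)) \<le> (Re (cinner a (R a)) + Re (cinner (s *\<^sub>R w) (R (s *\<^sub>R w)))) / 2"
    by (rule psd_ineq[OF R])
  also have "cmod (cinner (s *\<^sub>R w) (R a)) = s * d" using s by (simp add: cinner_scaleR_left d_def norm_mult)
  also have "Re (cinner (s *\<^sub>R w) (R (s *\<^sub>R w))) = s * s * q"
    by (simp add: bclin_scaleR[OF Rl] cinner_scaleR_left cinner_scaleR_right q_def)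
  finally have "s * d \<le> s * (s * q / 2)" using a by (simp add: algebra_simps)
  then have "d \<le> s * q / 2" using s by simp
  also have "s * q / 2 < d"
  proof -
    have "s * q = d * (q / (q + 1))" using q by (simp add: s_def)
    also have "\<dots> \<le> d * 1" using q d by (intro mult_left_mono) auto
    finally show ?thesis using d by simp
  qed
  finally show False by simp
qed

lemma null_orth':
  assumes R: "pos_semidef R" and a: "cinner a (R a) = 0"
  shows "cinner a (R w) = 0"
  using null_orth[OF R a, of w] psd_herm[OF R, of w a] by simp


definition ONf :: "('a::complex_inner \<Rightarrow> 'a) \<Rightarrow> nat \<Rightarrow> (nat \<Rightarrow> 'a) \<Rightarrow> bool" where
  "ONf R m h \<longleftrightarrow> (\<forall>j<m. \<forall>l<m. cinner (h j) (R (h l)) = (if j = l then 1 else 0))"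

definition rem :: "('a::complex_inner \<Rightarrow> 'a) \<Rightarrow> nat \<Rightarrow> (nat \<Rightarrow> 'a) \<Rightarrow> 'a \<Rightarrow> 'a" where
  "rem R m h x = x - (\<Sum>j<m. cinner (h j) (R x) *\<^sub>C h j)"

lemma inner_R_sum_right:
  assumes Rl: "bounded_clinear R"
  shows "cinner y (R (\<Sum>j<m. b j *\<^sub>C h j)) = (\<Sum>j<m. b j * cinner y (R (h j)))"
  by (simp add: bclin_sum[OF Rl] bclin_scaleC[OF Rl] cinner_sum_right cinner_scaleC_right)

lemma inner_R_sum_left:
  assumes Rl: "bounded_clinear R"
  shows "cinner (\<Sum>j<m. b j *\<^sub>C h j) (R y) = (\<Sum>j<m. cnj (b j) * cinner (h j) (R y))"
  by (simp add: cinner_sum_left cinner_scaleC_left)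

lemma ON_coeff:
  assumes Rl: "bounded_clinear R" and ON: "ONf R m h" and j: "j < m"
  shows "cinner (h j) (R (\<Sum>l<m. b l *\<^sub>C h l)) = b j"
proof -
  have "cinner (h j) (R (\<Sum>l<m. b l *\<^sub>C h l)) = (\<Sum>l<m. b l * (if j = l then 1 else 0))"
    using ON j by (simp add: inner_R_sum_right[OF Rl] ONf_def)
  also have "\<dots> = b j" using j by (simp add: if_distrib cong: if_cong)
  finally show ?thesis .
qed

lemma ON_sum:
  assumes Rl: "bounded_clinear R" and ON: "ONf R m h"
  shows "cinner (\<Sum>j<m. a j *\<^sub>C h j) (R (\<Sum>l<m. b l *\<^sub>C h l)) = (\<Sum>j<m. cnj (a j) * b j)"
  by (simp add: inner_R_sum_left[OF Rl] ON_coeff[OF Rl ON])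

lemma ON_inner_rem:
  assumes Rl: "bounded_clinear R" and ON: "ONf R m h" and j: "j < m"
  shows "cinner (h j) (R (rem R m h x)) = 0"
  by (simp add: rem_def bclin_diff[OF Rl] cinner_diff_right ON_coeff[OF Rl ON j])

lemma rem_lin:
  assumes Rl: "bounded_clinear R"
  shows "rem R m h (x + c *\<^sub>C y) = rem R m h x + c *\<^sub>C rem R m h y"
proof -
  have "(\<Sum>j<m. cinner (h j) (R (x + c *\<^sub>C y)) *\<^sub>C h j)
      = (\<Sum>j<m. cinner (h j) (R x) *\<^sub>C h j) + c *\<^sub>C (\<Sum>j<m. cinner (h j) (R y) *\<^sub>C h j)"
    by (simp add: bclin_add[OF Rl] bclin_scaleC[OF Rl] cinner_add_right cinner_scaleC_right
        scaleC_add_left sum.distrib scaleC_sum_right scaleC_scaleC)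
  then show ?thesis by (simp add: rem_def scaleC_diff_right algebra_simps)
qed

lemma parseval_gen:
  assumes R: "pos_semidef R" and ON: "ONf R m h"
  shows "cinner x (R x) = cinner (rem R m h x) (R (rem R m h x)) + (\<Sum>j<m. of_real ((cmod (cinner (h j) (R x)))\<^sup>2))"
proof -
  have Rl: "bounded_clinear R" using R by (rule psd_bclin)
  define z where "z = rem R m h x"
  define s where "s = (\<Sum>j<m. cinner (h j) (R x) *\<^sub>C h j)"
  have x: "x = z + s" by (simp add: z_def s_def rem_def)
  have sz: "cinner s (R z) = 0"
    by (simp add: s_def inner_R_sum_left[OF Rl] z_def ON_inner_rem[OF Rl ON])
  have zs: "cinner z (R s) = 0" using psd_herm[OF R, of s z] sz by simp
  have ss: "cinner s (R s) = (\<Sum>j<m. of_real ((cmod (cinner (h j) (R x)))\<^sup>2))"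
    unfolding s_def ON_sum[OF Rl ON]
    by (intro sum.cong refl) (metis complex_norm_square mult.commute of_real_power)
  have "cinner x (R x) = cinner z (R z) + cinner z (R s) + cinner s (R z) + cinner s (R s)"
    by (simp add: x bclin_add[OF Rl] cinner_add_left cinner_add_right)
  then have "cinner x (R x) = cinner z (R z) + (\<Sum>j<m. of_real ((cmod (cinner (h j) (R x)))\<^sup>2))"
    by (simp only: sz zs ss add_0_right)
  then show ?thesis by (simp only: z_def)
qed

lemma parseval:
  assumes R: "pos_semidef R" and ON: "ONf R m h" and null: "cinner (rem R m h x) (R (rem R m h x)) = 0"
  shows "Re (cinner x (R x)) = (\<Sum>j<m. (cmod (cinner (h j) (R x)))\<^sup>2)"
  using parseval_gen[OF R ON, of x] null by simp

lemma bessel: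
  assumes ON: "orthonormal_fam n e"
  shows "(\<Sum>i<n. (cmod (cinner (e i) y))\<^sup>2) \<le> (norm y)\<^sup>2"
proof -
  have ON': "ONf id n e" using ON by (simp add: ONf_def orthonormal_fam_def)
  have "Re (cinner y (id y)) = Re (cinner (rem id n e y) (id (rem id n e y))) + (\<Sum>i<n. (cmod (cinner (e i) (id y)))\<^sup>2)"
    using parseval_gen[OF psd_id ON', of y] by simp
  moreover have "0 \<le> Re (cinner (rem id n e y) (id (rem id n e y)))" by (rule psd_nonneg[OF psd_id])
  ultimately show ?thesis by (simp add: cinner_self_Re)
qed

lemma null_comb:
  assumes R: "pos_semidef R" and a: "cinner a (R a) = 0" and b: "cinner b (R b) = 0"
  shows "cinner (a + c *\<^sub>C b) (R (a + c *\<^sub>C b)) = 0"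
proof -
  have Rl: "bounded_clinear R" using R by (rule psd_bclin)
  have ab: "cinner a (R w) = 0" for w by (rule null_orth'[OF R a])
  have bb: "cinner b (R w) = 0" for w by (rule null_orth'[OF R b])
  show ?thesis
    by (simp add: bclin_add[OF Rl] bclin_scaleC[OF Rl] cinner_add_left cinner_add_right
        cinner_scaleC_left cinner_scaleC_right ab bb)
qed

lemma gram_schmidt:
  fixes n :: nat and v :: "nat \<Rightarrow> 'a::complex_inner"
  assumes R: "pos_semidef R"
  shows "\<exists>m h. ONf R m h \<and> (\<forall>c. cinner (rem R m h (\<Sum>i<n. c i *\<^sub>C v i)) (R (rem R m h (\<Sum>i<n. c i *\<^sub>C v i))) = 0)"
proof (induction n)
  case 0
  have "ONf R 0 h" for h by (simp add: ONf_def)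
  then show ?case using psd_bclin[OF R] by (auto simp: rem_def bclin_zero)
next
  case (Suc n)
  have Rl: "bounded_clinear R" using R by (rule psd_bclin)
  obtain m h where ON: "ONf R m h"
    and null: "\<And>c. cinner (rem R m h (\<Sum>i<n. c i *\<^sub>C v i)) (R (rem R m h (\<Sum>i<n. c i *\<^sub>C v i))) = 0"
    using Suc.IH by blast
  define r where "r = rem R m h (v n)"
  have split: "(\<Sum>i<Suc n. c i *\<^sub>C v i) = (\<Sum>i<n. c i *\<^sub>C v i) + c n *\<^sub>C v n" for c by simp
  show ?case
  proof (cases "cinner r (R r) = 0")
    case True
    show ?thesis
    proof (intro exI conjI allI)
      show "ONf R m h" by (rule ON)
      fix c
      show "cinner (rem R m h (\<Sum>i<Suc n. c i *\<^sub>C v i)) (R (rem R m h (\<Sum>i<Suc n. c i *\<^sub>C v i))) = 0"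
        unfolding split rem_lin[OF Rl] r_def[symmetric] by (rule null_comb[OF R null True])
    qed
  next
    case False
    define q where "q = Re (cinner r (R r))"
    have rq: "cinner r (R r) = of_real q" using psd_real[OF R] by (simp add: q_def)
    have q0: "q \<ge> 0" unfolding q_def by (rule psd_nonneg[OF R])
    have "q \<noteq> 0" using False rq by auto
    then have q: "q > 0" using q0 by simp
    define s where "s = sqrt q"
    have s: "s > 0" using q by (simp add: s_def)
    have ss: "s * s = q" using q by (simp add: s_def)
    define hm where "hm = (1/s) *\<^sub>R r"
    define h' where "h' = h(m := hm)"
    have hr: "cinner (h j) (R r) = 0" if "j < m" for j
      unfolding r_def by (rule ON_inner_rem[OF Rl ON that])
    have hhm: "cinner (h j) (R hm) = 0" if "j < m" for j
      using hr[OF that] by (simp add: hm_def bclin_scaleR[OF Rl] cinner_scaleR_right)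
    have hmh: "cinner hm (R (h j)) = 0" if "j < m" for j
      using psd_herm[OF R, of "h j" hm] hhm[OF that] by simp
    have sq: "complex_of_real q = of_real s * of_real s" by (simp add: ss[symmetric])
    have hmhm: "cinner hm (R hm) = 1"
      using s by (simp add: hm_def bclin_scaleR[OF Rl] cinner_scaleR_right cinner_scaleR_left rq sq)
    have hmr: "cinner hm (R r) = of_real s"
      using s by (simp add: hm_def cinner_scaleR_left rq sq)
    have ON': "ONf R (Suc m) h'"
      unfolding ONf_def
    proof (intro allI impI)
      fix j l assume j: "j < Suc m" and l: "l < Suc m"
      show "cinner (h' j) (R (h' l)) = (if j = l then 1 else 0)"
        using ON j l hhm hmh hmhm by (cases "j = m"; cases "l = m") (auto simp: h'_def ONf_def less_Suc_eq)
    qed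
    have rem': "rem R (Suc m) h' x = rem R m h x - cinner hm (R x) *\<^sub>C hm" for x
    proof -
      have "(\<Sum>j<m. cinner (h' j) (R x) *\<^sub>C h' j) = (\<Sum>j<m. cinner (h j) (R x) *\<^sub>C h j)"
        by (intro sum.cong refl) (simp add: h'_def)
      then show ?thesis by (simp add: rem_def h'_def algebra_simps)
    qed
    show ?thesis
    proof (intro exI conjI allI)
      show "ONf R (Suc m) h'" by (rule ON')
      fix c
      define x0 where "x0 = (\<Sum>i<n. c i *\<^sub>C v i)"
      define z0 where "z0 = rem R m h x0"
      have z0null: "cinner z0 (R z0) = 0" using null by (simp add: z0_def x0_def)
      have remx: "rem R m h (x0 + c n *\<^sub>C v n) = z0 + c n *\<^sub>C r"
        by (simp add: rem_lin[OF Rl] z0_def r_def)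
      have xdec: "x0 + c n *\<^sub>C v n = rem R m h (x0 + c n *\<^sub>C v n) + (\<Sum>j<m. cinner (h j) (R (x0 + c n *\<^sub>C v n)) *\<^sub>C h j)"
        by (simp add: rem_def)
      have "cinner hm (R (x0 + c n *\<^sub>C v n)) = cinner hm (R (z0 + c n *\<^sub>C r))
          + cinner hm (R (\<Sum>j<m. cinner (h j) (R (x0 + c n *\<^sub>C v n)) *\<^sub>C h j))"
        by (subst xdec) (simp add: remx bclin_add[OF Rl] cinner_add_right)
      also have "cinner hm (R (\<Sum>j<m. cinner (h j) (R (x0 + c n *\<^sub>C v n)) *\<^sub>C h j)) = 0"
        by (simp add: inner_R_sum_right[OF Rl] hmh)
      also have "cinner hm (R (z0 + c n *\<^sub>C r)) = c n * of_real s"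
        using null_orth[OF R z0null, of hm]
        by (simp add: bclin_add[OF Rl] bclin_scaleC[OF Rl] cinner_add_right cinner_scaleC_right hmr)
      finally have coef: "cinner hm (R (x0 + c n *\<^sub>C v n)) = c n * of_real s" by simp
      have "(c n * of_real s) *\<^sub>C hm = c n *\<^sub>C r"
        using s by (simp add: hm_def scaleC_scaleC scaleR_scaleC)
      then have "rem R (Suc m) h' (x0 + c n *\<^sub>C v n) = z0"
        by (simp add: rem' remx coef)
      then show "cinner (rem R (Suc m) h' (\<Sum>i<Suc n. c i *\<^sub>C v i)) (R (rem R (Suc m) h' (\<Sum>i<Suc n. c i *\<^sub>C v i))) = 0"
        using z0null by (simp add: x0_def)
    qed
  qed
qed


lemma combo_single:
  fixes v :: "nat \<Rightarrow> 'a::complex_vector"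
  assumes "i < n"
  shows "(\<Sum>i'<n. (if i' = i then 1 else 0) *\<^sub>C v i') = v i"
proof -
  have "(\<Sum>i'<n. (if i' = i then 1 else 0) *\<^sub>C v i') = (\<Sum>i'<n. if i' = i then v i else 0)"
    by (intro sum.cong refl) auto
  also have "\<dots> = v i" using assms by simp
  finally show ?thesis .
qed

lemma key_trace:
  fixes v :: "nat \<Rightarrow> 'a::complex_inner"
  assumes Q: "pos_semidef Q" and tc: "bdd_above (trace_sums Q)" and c2: "0 \<le> c2"
    and frame: "\<And>z. (\<Sum>i<n. (cmod (cinner (v i) z))\<^sup>2) \<le> c2 * (norm z)\<^sup>2"
  shows "(\<Sum>i<n. Re (cinner (v i) (Q (v i)))) \<le> c2 * trace_norm Q"
proof -
  have Ql: "bounded_clinear Q" using Q by (rule psd_bclin)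
  have idl: "bounded_clinear (id :: 'a \<Rightarrow> 'a)" by (rule bclin_id')
  obtain m g where ONg: "ONf id m g"
    and nullg: "\<And>c. cinner (rem id m g (\<Sum>i<n. c i *\<^sub>C v i)) (id (rem id m g (\<Sum>i<n. c i *\<^sub>C v i))) = 0"
    using gram_schmidt[OF psd_id] by blast
  have vexp: "v i = (\<Sum>k<m. cinner (g k) (v i) *\<^sub>C g k)" if i: "i < n" for i
  proof -
    have "cinner (rem id m g (v i)) (rem id m g (v i)) = 0"
      using nullg[of "\<lambda>i'. if i' = i then 1 else 0"] combo_single[OF i, of v] by simp
    then have "rem id m g (v i) = 0" by (simp add: cinner_eq_zero_iff)
    then show ?thesis by (simp add: rem_def)
  qed
  have ONstd: "orthonormal_fam m g" using ONg by (simp add: ONf_def orthonormal_fam_def)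
  obtain r h where ONh: "ONf Q r h"
    and nullh: "\<And>c. cinner (rem Q r h (\<Sum>k<m. c k *\<^sub>C g k)) (Q (rem Q r h (\<Sum>k<m. c k *\<^sub>C g k))) = 0"
    using gram_schmidt[OF Q] by blast
  have parv: "Re (cinner (v i) (Q (v i))) = (\<Sum>j<r. (cmod (cinner (h j) (Q (v i))))\<^sup>2)" if i: "i < n" for i
  proof (rule parseval[OF Q ONh])
    show "cinner (rem Q r h (v i)) (Q (rem Q r h (v i))) = 0"
      using nullh[of "\<lambda>k. cinner (g k) (v i)"] vexp[OF i] by simp
  qed
  have parg: "Re (cinner (g k) (Q (g k))) = (\<Sum>j<r. (cmod (cinner (h j) (Q (g k))))\<^sup>2)" if k: "k < m" for k
  proof (rule parseval[OF Q ONh])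
    show "cinner (rem Q r h (g k)) (Q (rem Q r h (g k))) = 0"
      using nullh[of "\<lambda>k'. if k' = k then 1 else 0"] combo_single[OF k, of g] by simp
  qed
  define P where "P = (\<lambda>w. \<Sum>k<m. cinner (g k) w *\<^sub>C g k)"
  have inner_P: "cinner w (v i) = cinner (P w) (v i)" if i: "i < n" for w i
  proof -
    have "cinner w (v i) = (\<Sum>k<m. cinner (g k) (v i) * cinner w (g k))"
      by (subst vexp[OF i]) (simp add: cinner_sum_right cinner_scaleC_right)
    also have "\<dots> = cinner (P w) (v i)"
      unfolding P_def by (subst vexp[OF i], subst ON_sum[OF idl ONg, simplified])
        (intro sum.cong refl, metis cinner_commute mult.commute)
    finally show ?thesis .
  qed
  have normP: "(norm (P w))\<^sup>2 = (\<Sum>k<m. (cmod (cinner (g k) w))\<^sup>2)" for w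
  proof -
    have "cinner (P w) (P w) = (\<Sum>k<m. cnj (cinner (g k) w) * cinner (g k) w)"
      unfolding P_def using ON_sum[OF idl ONg] by simp
    also have "\<dots> = (\<Sum>k<m. of_real ((cmod (cinner (g k) w))\<^sup>2))"
      by (intro sum.cong refl) (metis complex_norm_square mult.commute of_real_power)
    finally show ?thesis by (simp add: cinner_self_Re[symmetric])
  qed
  have "(\<Sum>i<n. Re (cinner (v i) (Q (v i)))) = (\<Sum>i<n. \<Sum>j<r. (cmod (cinner (h j) (Q (v i))))\<^sup>2)"
    by (intro sum.cong refl) (simp add: parv)
  also have "\<dots> = (\<Sum>j<r. \<Sum>i<n. (cmod (cinner (v i) (P (Q (h j)))))\<^sup>2)"
  proof (subst sum.swap, intro sum.cong refl)
    fix j i assume i: "i \<in> {..<n}"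
    have "cinner (h j) (Q (v i)) = cinner (P (Q (h j))) (v i)"
      using psd_sym[OF Q, of "h j" "v i"] inner_P[of i "Q (h j)"] i by simp
    then show "(cmod (cinner (h j) (Q (v i))))\<^sup>2 = (cmod (cinner (v i) (P (Q (h j)))))\<^sup>2"
      by (metis cinner_commute complex_mod_cnj)
  qed
  also have "\<dots> \<le> (\<Sum>j<r. c2 * (norm (P (Q (h j))))\<^sup>2)"
    by (intro sum_mono frame)
  also have "\<dots> = c2 * (\<Sum>k<m. \<Sum>j<r. (cmod (cinner (h j) (Q (g k))))\<^sup>2)"
  proof -
    have "(\<Sum>j<r. c2 * (norm (P (Q (h j))))\<^sup>2) = c2 * (\<Sum>j<r. \<Sum>k<m. (cmod (cinner (g k) (Q (h j))))\<^sup>2)"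
      by (simp add: normP sum_distrib_left)
    also have "(\<Sum>j<r. \<Sum>k<m. (cmod (cinner (g k) (Q (h j))))\<^sup>2) = (\<Sum>k<m. \<Sum>j<r. (cmod (cinner (h j) (Q (g k))))\<^sup>2)"
      by (subst sum.swap, intro sum.cong refl) (metis complex_mod_cnj psd_herm[OF Q])
    finally show ?thesis .
  qed
  also have "\<dots> = c2 * (\<Sum>k<m. Re (cinner (g k) (Q (g k))))"
    by (simp add: parg)
  also have "\<dots> \<le> c2 * (\<Sum>k<m. cmod (cinner (g k) (Q (g k))))"
    by (intro mult_left_mono c2 sum_mono complex_Re_le_cmod)
  also have "(\<Sum>k<m. cmod (cinner (g k) (Q (g k)))) \<le> trace_norm Q"
  proof -
    have "(\<Sum>k<m. cmod (cinner (g k) (Q (g k)))) \<in> trace_sums Q"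
      unfolding trace_sums_def using ONstd by blast
    then show ?thesis unfolding trace_norm_def using tc by (rule cSup_upper)
  qed
  finally show ?thesis using c2 by (simp add: mult_left_mono)
qed


context sg2 begin

lemma exp_integral:
  assumes C: "0 \<le> C"
  shows "integral\<^sup>L (lebesgue_on {0..}) (\<lambda>t. C * exp (- (2 * \<alpha>) * t)) = C / (2 * \<alpha>)"
proof -
  have "((\<lambda>t. exp (- (2 * \<alpha>) * t)) has_integral exp (- (2 * \<alpha>) * 0) / (2 * \<alpha>)) {0..}"
    using has_integral_exp_minus_to_infinity[of "2 * \<alpha>" 0] apos by simp
  then have "((\<lambda>t. C *\<^sub>R exp (- (2 * \<alpha>) * t)) has_integral C *\<^sub>R (exp (- (2 * \<alpha>) * 0) / (2 * \<alpha>))) {0..}"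
    by (rule has_integral_cmul)
  then have h1: "((\<lambda>t. C * exp (- (2 * \<alpha>) * t)) has_integral C / (2 * \<alpha>)) {0..}" by simp
  have h2: "((\<lambda>t. C * exp (- (2 * \<alpha>) * t)) has_integral integral\<^sup>L (lebesgue_on {0..}) (\<lambda>t. C * exp (- (2 * \<alpha>) * t))) {0..}"
    by (rule has_integral_integral_lebesgue_on[OF exp_integrable[OF C] sets0])
  show ?thesis using has_integral_unique[OF h2 h1] .
qed

lemma trace_diag_bound:
  assumes X: "pos_semidef X" and Q: "pos_semidef Q" and G: "pos_semidef G"
    and tc: "bdd_above (trace_sums Q)"
    and V: "\<And>\<psi>. has_bochner_integral (lebesgue_on {0..}) (\<lambda>t. S t (Q (Sa t \<psi>) - X (G (X (Sa t \<psi>))))) (X \<psi>)"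
    and ON: "orthonormal_fam n e"
  shows "(\<Sum>i<n. Re (cinner (e i) (X (e i)))) \<le> M\<^sup>2 / (2 * \<alpha>) * trace_norm Q"
proof -
  have Xl: "bounded_clinear X" using X by (rule psd_bclin)
  have Ql: "bounded_clinear Q" using Q by (rule psd_bclin)
  have Gl: "bounded_clinear G" using G by (rule psd_bclin)
  define W where "W = (\<lambda>x. Q x - X (G (X x)))"
  have Wl: "bounded_clinear W" unfolding W_def
    by (rule bclin_diff_op[OF Ql bclin_comp[OF Xl bclin_comp[OF Gl Xl]]])
  define f where "f = (\<lambda>i t. Re (cinner (e i) (S t (W (Sa t (e i))))))"
  have blR: "bounded_linear (\<lambda>z. Re (cinner (e i) z))" for i
    by (rule bounded_linear_compose[OF bounded_linear_Re bl_cinner])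
  have hb: "has_bochner_integral (lebesgue_on {0..}) (f i) (Re (cinner (e i) (X (e i))))" for i
    unfolding f_def W_def by (rule has_bochner_integral_bounded_linear[OF blR V])
  then have hbs: "has_bochner_integral (lebesgue_on {0..}) (\<lambda>t. \<Sum>i<n. f i t) (\<Sum>i<n. Re (cinner (e i) (X (e i))))"
    by (intro has_bochner_integral_sum)
  have trQ: "0 \<le> trace_norm Q"
  proof -
    have "(0::real) = (\<Sum>i<(0::nat). cmod (cinner (e i) (Q (e i)))) \<and> orthonormal_fam 0 e \<and> orthonormal_fam 0 e"
      by (simp add: orthonormal_fam_def)
    then have "0 \<in> trace_sums Q" unfolding trace_sums_def by blast
    then show ?thesis unfolding trace_norm_def using tc by (rule cSup_upper)
  qed
  define C where "C = M\<^sup>2 * trace_norm Q"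
  have C: "0 \<le> C" using trQ by (simp add: C_def)
  have pw: "(\<Sum>i<n. f i t) \<le> C * exp (- (2 * \<alpha>) * t)" if t: "0 \<le> t" for t
  proof -
    define v where "v = (\<lambda>i. Sa t (e i))"
    have fi: "f i t \<le> Re (cinner (v i) (Q (v i)))" for i
    proof -
      have "f i t = Re (cinner (v i) (W (v i)))" by (simp add: f_def v_def Sa_inner2[OF t])
      also have "\<dots> = Re (cinner (v i) (Q (v i))) - Re (cinner (X (v i)) (G (X (v i))))"
        by (simp add: W_def cinner_diff_right psd_sym[OF X])
      also have "\<dots> \<le> Re (cinner (v i) (Q (v i)))" using psd_nonneg[OF G] by simp
      finally show ?thesis .
    qed
    define c2 where "c2 = (M * exp (- \<alpha> * t))\<^sup>2"
    have frame: "(\<Sum>i<n. (cmod (cinner (v i) z))\<^sup>2) \<le> c2 * (norm z)\<^sup>2" for z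
    proof -
      have "(\<Sum>i<n. (cmod (cinner (v i) z))\<^sup>2) = (\<Sum>i<n. (cmod (cinner (e i) (S t z)))\<^sup>2)"
        by (simp add: v_def Sa_inner2[OF t])
      also have "\<dots> \<le> (norm (S t z))\<^sup>2" by (rule bessel[OF ON])
      also have "\<dots> \<le> (M * exp (- \<alpha> * t) * norm z)\<^sup>2"
        by (rule power_mono[OF S_norm[OF t]]) simp
      finally show ?thesis by (simp add: c2_def power_mult_distrib)
    qed
    have "(\<Sum>i<n. f i t) \<le> (\<Sum>i<n. Re (cinner (v i) (Q (v i))))" by (intro sum_mono fi)
    also have "\<dots> \<le> c2 * trace_norm Q" by (rule key_trace[OF Q tc _ frame]) (simp add: c2_def)
    also have "c2 = M\<^sup>2 * exp (- (2 * \<alpha>) * t)"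
    proof -
      have "exp (- \<alpha> * t) * exp (- \<alpha> * t) = exp (- (2 * \<alpha>) * t)"
        by (subst exp_add[symmetric]) (simp add: algebra_simps)
      then show ?thesis by (simp add: c2_def power2_eq_square algebra_simps)
    qed
    finally show ?thesis by (simp add: C_def algebra_simps)
  qed
  have "(\<Sum>i<n. Re (cinner (e i) (X (e i)))) = integral\<^sup>L (lebesgue_on {0..}) (\<lambda>t. \<Sum>i<n. f i t)"
    using hbs by (simp add: has_bochner_integral_integral_eq)
  also have "\<dots> \<le> integral\<^sup>L (lebesgue_on {0..}) (\<lambda>t. C * exp (- (2 * \<alpha>) * t))"
  proof (rule Bochner_Integration.integral_mono)
    show "integrable (lebesgue_on {0..}) (\<lambda>t. \<Sum>i<n. f i t)" using hbs by (auto simp: integrable.simps)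
    show "integrable (lebesgue_on {0..}) (\<lambda>t. C * exp (- (2 * \<alpha>) * t))" by (rule exp_integrable[OF C])
    fix t assume "t \<in> space (lebesgue_on {0::real..})"
    then show "(\<Sum>i<n. f i t) \<le> C * exp (- (2 * \<alpha>) * t)" by (intro pw) simp
  qed
  also have "\<dots> = C / (2 * \<alpha>)" by (rule exp_integral[OF C])
  finally show ?thesis by (simp add: C_def)
qed

end

theorem theorem1:
  fixes S :: "real \<Rightarrow> 'h::{chilbert_space, second_countable_topology} \<Rightarrow> 'h"
    and D Ds :: "'h set" and A As :: "'h \<Rightarrow> 'h"
    and Q G X :: "'h \<Rightarrow> 'h" and M \<alpha> :: real
  assumes semigroup: "c0_semigroup S"
    and gen: "is_generator S D A"
    and gen_adj: "is_generator (\<lambda>t. cadjoint (S t)) Ds As"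
    and M_pos: "M > 0" and \<alpha>_pos: "\<alpha> > 0"
    and exp_stable: "\<forall>t\<ge>0. onorm (S t) \<le> M * exp (- \<alpha> * t)"
    and Q_psd: "pos_semidef Q" and G_psd: "pos_semidef G"
    and X_psd: "pos_semidef X"
    and X_sol: "riccati_integral_eq S Q G X"
    and X_unique: "\<forall>Y. pos_semidef Y \<and> riccati_integral_eq S Q G Y \<longrightarrow> Y = X"
  shows "strong_riccati_eq S D A Ds As Q G X
         \<and> (\<forall>Y. pos_semidef Y \<and> strong_riccati_eq S D A Ds As Q G Y \<longrightarrow> Y = X)
         \<and> (trace_class Q \<longrightarrow>
              trace_class X \<and> trace_norm X \<le> M\<^sup>2 / (2 * \<alpha>) * trace_norm Q)"
proof -
  interpret sg2 S M \<alpha>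
    by unfold_locales (use semigroup M_pos \<alpha>_pos exp_stable in auto)
  have Xl: "bounded_clinear X" using X_psd by (rule psd_bclin)
  have Ql: "bounded_clinear Q" using Q_psd by (rule psd_bclin)
  have Gl: "bounded_clinear G" using G_psd by (rule psd_bclin)
  define W where "W = (\<lambda>x. Q x - X (G (X x)))"
  have Wl: "bounded_clinear W" unfolding W_def
    by (rule bclin_diff_op[OF Ql bclin_comp[OF Xl bclin_comp[OF Gl Xl]]])
  have V: "\<And>\<psi>. has_bochner_integral (lebesgue_on {0..}) (\<lambda>t. S t (W (cadjoint (S t) \<psi>))) (X \<psi>)"
    using X_sol unfolding riccati_integral_eq_def W_def by blast
  define Z where "Z = (\<lambda>x. X (G (X x)) - Q x)"
  have Zsym: "symmetric_op Z"
    unfolding symmetric_op_def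
  proof (intro conjI allI)
    show "bounded_clinear Z" unfolding Z_def
      by (rule bclin_diff_op[OF bclin_comp[OF Xl bclin_comp[OF Gl Xl]] Ql])
    fix x y
    show "cinner (Z x) y = cinner x (Z y)"
      by (simp add: Z_def cinner_diff_left cinner_diff_right psd_sym[OF X_psd] psd_sym[OF G_psd] psd_sym[OF Q_psd])
  qed
  have limX: "((\<lambda>h. (1/h) *\<^sub>R (S h (X (cadjoint (S h) \<phi>)) - X \<phi>)) \<longlongrightarrow> Z \<phi>) (at_right 0)" for \<phi>
    using deriv_lemma[OF Wl V, of \<phi>] by (simp add: W_def Z_def)
  have partA: "strong_riccati_eq S D A Ds As Q G X"
    unfolding strong_riccati_eq_def
  proof (rule exI[of _ Z], intro conjI)
    show "symmetric_op Z" by (rule Zsym)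
    show "\<forall>\<phi>. ((\<lambda>h. (1/h) *\<^sub>R (S h (X (cadjoint (S h) \<phi>)) - X \<phi>)) \<longlongrightarrow> Z \<phi>) (at_right 0)"
      using limX by blast
    show "\<forall>\<phi>. Z \<phi> - X (G (X \<phi>)) + Q \<phi> = 0" by (simp add: Z_def)
    show "\<forall>\<phi>\<in>Ds. X \<phi> \<in> D \<and> A (X \<phi>) + X (As \<phi>) = Z \<phi>"
    proof
      fix \<phi> assume \<phi>: "\<phi> \<in> Ds"
      have adj: "((\<lambda>h. (1/h) *\<^sub>R (cadjoint (S h) \<phi> - \<phi>)) \<longlongrightarrow> As \<phi>) (at_right 0)"
        using gen_adj \<phi> unfolding is_generator_def by blast
      have dl: "((\<lambda>h. (1/h) *\<^sub>R (S h (X \<phi>) - X \<phi>)) \<longlongrightarrow> Z \<phi> - X (As \<phi>)) (at_right 0)"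
        by (rule dom_lemma[OF Xl limX adj])
      have XD: "X \<phi> \<in> D" using gen dl unfolding is_generator_def by blast
      have "((\<lambda>h. (1/h) *\<^sub>R (S h (X \<phi>) - X \<phi>)) \<longlongrightarrow> A (X \<phi>)) (at_right 0)"
        using gen XD unfolding is_generator_def by blast
      then have "A (X \<phi>) = Z \<phi> - X (As \<phi>)"
        using tendsto_unique[OF trivial_limit_at_right_real _ dl] by blast
      then show "X \<phi> \<in> D \<and> A (X \<phi>) + X (As \<phi>) = Z \<phi>" using XD by simp
    qed
  qed
  have partB: "\<forall>Y. pos_semidef Y \<and> strong_riccati_eq S D A Ds As Q G Y \<longrightarrow> Y = X"
  proof (intro allI impI, elim conjE)
    fix Y assume Y: "pos_semidef Y" and sr: "strong_riccati_eq S D A Ds As Q G Y"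
    obtain Z' where lim': "\<And>\<phi>. ((\<lambda>h. (1/h) *\<^sub>R (S h (Y (cadjoint (S h) \<phi>)) - Y \<phi>)) \<longlongrightarrow> Z' \<phi>) (at_right 0)"
      and c4: "\<And>\<phi>. Z' \<phi> - Y (G (Y \<phi>)) + Q \<phi> = 0"
      using sr unfolding strong_riccati_eq_def by blast
    have Yl: "bounded_clinear Y" using Y by (rule psd_bclin)
    define W' where "W' = (\<lambda>x. Q x - Y (G (Y x)))"
    have W'l: "bounded_clinear W'" unfolding W'_def
      by (rule bclin_diff_op[OF Ql bclin_comp[OF Yl bclin_comp[OF Gl Yl]]])
    have ZW: "Z' \<phi> = - W' \<phi>" for \<phi>
    proof -
      have "- W' \<phi> = Z' \<phi> - (Z' \<phi> - Y (G (Y \<phi>)) + Q \<phi>)" by (simp add: W'_def algebra_simps)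
      then show ?thesis using c4[of \<phi>] by simp
    qed
    have lim'': "((\<lambda>h. (1/h) *\<^sub>R (S h (Y (cadjoint (S h) \<phi>)) - Y \<phi>)) \<longlongrightarrow> - W' \<phi>) (at_right 0)" for \<phi>
      using lim'[of \<phi>] by (simp add: ZW)
    have "riccati_integral_eq S Q G Y"
      unfolding riccati_integral_eq_def using strong_to_integral[OF W'l Yl lim''] by (simp add: W'_def)
    then show "Y = X" using X_unique Y by blast
  qed
  have partC: "trace_class Q \<longrightarrow> trace_class X \<and> trace_norm X \<le> M\<^sup>2 / (2 * \<alpha>) * trace_norm Q"
  proof
    assume tcQ: "trace_class Q"
    have tc: "bdd_above (trace_sums Q)" using tcQ by (simp add: trace_class_def)
    have V': "\<And>\<psi>. has_bochner_integral (lebesgue_on {0..}) (\<lambda>t. S t (Q (cadjoint (S t) \<psi>) - X (G (X (cadjoint (S t) \<psi>))))) (X \<psi>)"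
      using X_sol unfolding riccati_integral_eq_def by blast
    define B where "B = M\<^sup>2 / (2 * \<alpha>) * trace_norm Q"
    have diag: "(\<Sum>i<n. Re (cinner (e i) (X (e i)))) \<le> B" if "orthonormal_fam n e" for n e
      unfolding B_def by (rule trace_diag_bound[OF X_psd Q_psd G_psd tc V' that])
    have elem: "s \<le> B" if sX: "s \<in> trace_sums X" for s
    proof -
      obtain n e f where s: "s = (\<Sum>i<n. cmod (cinner (f i) (X (e i))))"
        and oe: "orthonormal_fam n e" and of: "orthonormal_fam n f"
        using sX unfolding trace_sums_def by blast
      have "s \<le> (\<Sum>i<n. (Re (cinner (e i) (X (e i))) + Re (cinner (f i) (X (f i)))) / 2)"
        unfolding s by (intro sum_mono psd_ineq[OF X_psd])
      also have "\<dots> = ((\<Sum>i<n. Re (cinner (e i) (X (e i)))) + (\<Sum>i<n. Re (cinner (f i) (X (f i))))) / 2"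
        by (simp only: sum.distrib[symmetric] sum_divide_distrib[symmetric])
      also have "\<dots> \<le> (B + B) / 2" using diag[OF oe] diag[OF of] by simp
      finally show ?thesis by simp
    qed
    have ne: "trace_sums X \<noteq> {}"
    proof -
      define e0 :: "nat \<Rightarrow> 'h" where "e0 = (\<lambda>_. 0)"
      have "(0::real) = (\<Sum>i<(0::nat). cmod (cinner (e0 i) (X (e0 i)))) \<and> orthonormal_fam 0 e0 \<and> orthonormal_fam 0 e0"
        by (simp add: orthonormal_fam_def)
      then have "0 \<in> trace_sums X" unfolding trace_sums_def by blast
      then show ?thesis by blast
    qed
    have "bdd_above (trace_sums X)" using elem by (rule bdd_aboveI)
    then have "trace_class X" unfolding trace_class_def using Xl by simp
    moreover have "trace_norm X \<le> B" unfolding trace_norm_def by (rule cSup_least[OF ne elem])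
    ultimately show "trace_class X \<and> trace_norm X \<le> M\<^sup>2 / (2 * \<alpha>) * trace_norm Q" by (simp add: B_def)
  qed
  show ?thesis using partA partB partC by blast
qed


end
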